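(* For $\lambda=(\sigma,b,r)\in(0,\infty)^3$ let $\mathscr A_\lambda\subseteq\mathbb R^3$ be the global attractor of the semigroup generated by the Lorenz system $x'=-\sigma x+\sigma y$, $y'=rx-y-xz$, $z'=-bz+xy$. There is a residual and dense subset $\Lambda_*\subseteq(0,\infty)^3$ such that the map $(0,\infty)^3\to CB(\mathbb R^3)$, $\lambda\mapsto\mathscr A_\lambda$, is continuous at every $\lambda\in\Lambda_*$.
   Context: For each $\lambda\in(0,\infty)^3$ the Lorenz system generates a semigroup $S_\lambda(t)$ on $\mathbb R^3$ possessing a global attractor, i.e. a compact invariant set attracting every bounded set. $CB(\mathbb R^3)$ is the space of nonempty closed bounded subsets of $\mathbb R^3$ with the Hausdorff metric $\Delta(A,C)=\max(\sup_{a\in A}\inf_{c\in C}|a-c|,\sup_{c\in C}\inf_{a\in A}|a-c|)$. A set is residual if its complement is a countable union of nowhere dense sets. *)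

theory Defs
  imports "HOL-Analysis.Analysis"
begin

type_synonym R3 = "real \<times> real \<times> real"

definition lorenz :: "R3 \<Rightarrow> R3 \<Rightarrow> R3" where
  "lorenz lam p = (case lam of (\<sigma>, b, r) \<Rightarrow> case p of (x, y, z) \<Rightarrow>
     (- \<sigma> * x + \<sigma> * y, r * x - y - x * z, - b * z + x * y))"

definition lorenz_solution :: "R3 \<Rightarrow> (real \<Rightarrow> R3) \<Rightarrow> bool" where
  "lorenz_solution lam u \<longleftrightarrow>
     (\<forall>s\<ge>0. (u has_vector_derivative lorenz lam (u s)) (at s within {0..}))"

definition lorenz_semigroup :: "R3 \<Rightarrow> real \<Rightarrow> R3 \<Rightarrow> R3" where
  "lorenz_semigroup lam t x = (THE y. \<exists>u. lorenz_solution lam u \<and> u 0 = x \<and> u t = y)"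

definition is_global_attractor :: "(real \<Rightarrow> R3 \<Rightarrow> R3) \<Rightarrow> R3 set \<Rightarrow> bool" where
  "is_global_attractor S A \<longleftrightarrow>
     A \<noteq> {} \<and> compact A \<and> (\<forall>t\<ge>0. S t ` A = A) \<and>
     (\<forall>B. bounded B \<longrightarrow>
        (\<forall>e>0. \<exists>T. \<forall>t\<ge>T. \<forall>x\<in>B. infdist (S t x) A < e))"

definition lorenz_attractor :: "R3 \<Rightarrow> R3 set" where
  "lorenz_attractor lam = (THE A. is_global_attractor (lorenz_semigroup lam) A)"

definition hausdorff_dist :: "'a::metric_space set \<Rightarrow> 'a set \<Rightarrow> real" where
  "hausdorff_dist A C = max (SUP a\<in>A. infdist a C) (SUP c\<in>C. infdist c A)"

definition pos_params :: "R3 set" where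
  "pos_params = {(\<sigma>, b, r). \<sigma> > 0 \<and> b > 0 \<and> r > 0}"

definition nowhere_dense :: "'a::topological_space set \<Rightarrow> bool" where
  "nowhere_dense N \<longleftrightarrow> interior (closure N) = {}"

definition residual_in :: "'a::topological_space set \<Rightarrow> 'a set \<Rightarrow> bool" where
  "residual_in L X \<longleftrightarrow> L \<subseteq> X \<and>
     (\<exists>N :: nat \<Rightarrow> 'a set. (\<forall>n. nowhere_dense (N n)) \<and> X - L \<subseteq> (\<Union>n. N n))"

definition dense_in :: "'a::topological_space set \<Rightarrow> 'a set \<Rightarrow> bool" where
  "dense_in L X \<longleftrightarrow> L \<subseteq> X \<and> X \<subseteq> closure L"

end

theory Submission
  imports Defs
begin


lemma at_within_0_le:
  assumes "0 \<le> s" "s < b"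
  shows "at s within {0..b} = at (s::real) within {0..}"
  by (rule at_within_nhd[of _ "{..<b}"]) (use assms in auto)

lemma indef_int_deriv:
  fixes h :: "real \<Rightarrow> 'a::banach"
  assumes "continuous_on {0..b} h" "0 \<le> s" "s < b"
  shows "((\<lambda>t. integral {0..t} h) has_vector_derivative h s) (at s within {0..})"
proof -
  have "((\<lambda>t. integral {0..t} h) has_vector_derivative h s) (at s within {0..b})"
    by (rule integral_has_vector_derivative) (use assms in auto)
  then show ?thesis using at_within_0_le[OF assms(2,3)] by simp
qed

lemma deriv_imp_cont_on:
  fixes u :: "real \<Rightarrow> 'a::real_normed_vector"
  assumes "\<And>s. s \<in> S \<Longrightarrow> (u has_vector_derivative u' s) (at s within S)"
  shows "continuous_on S u"
  using assms has_vector_derivative_continuous continuous_on_eq_continuous_within by blast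

lemma integral_pow_bound:
  assumes "0 \<le> t"
  shows "integral {0..t} (\<lambda>s. c * s ^ k) = c * t ^ Suc k / Suc k"
proof -
  have "((\<lambda>s. c * s ^ k) has_integral ((\<lambda>s. c * s ^ Suc k / Suc k) t - (\<lambda>s. c * s ^ Suc k / Suc k) 0)) {0..t}"
  proof (rule fundamental_theorem_of_calculus[OF assms])
    fix x assume "x \<in> {0..t}"
    show "((\<lambda>s. c * s ^ Suc k / real (Suc k)) has_vector_derivative c * x ^ k) (at x within {0..t})"
      unfolding has_real_derivative_iff_has_vector_derivative[symmetric]
      by (rule derivative_eq_intros refl | simp)+
  qed
  from integral_unique[OF this] show ?thesis by simp
qed

context
  fixes g :: "'a::banach \<Rightarrow> 'a" and L M :: real and x0 :: 'a
  assumes Lg: "\<And>p q. norm (g p - g q) \<le> L * norm (p - q)"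
  and Mg: "\<And>p. norm (g p) \<le> M"
  and L0: "L \<ge> 0"
begin

lemma M0: "M \<ge> 0" using Mg[of x0] norm_ge_zero order_trans by blast

lemma g_cont: "continuous_on UNIV g"
  unfolding continuous_on_iff
proof (intro ballI allI impI)
  fix x and e :: real assume "e > 0"
  show "\<exists>d>0. \<forall>x'\<in>UNIV. dist x' x < d \<longrightarrow> dist (g x') (g x) < e"
  proof (intro exI[of _ "e/(L+1)"] conjI ballI impI)
    show "e/(L+1) > 0" using \<open>e>0\<close> L0 by simp
    fix x' assume "dist x' x < e/(L+1)"
    then have "(L+1) * dist x' x < e" using L0 by (simp add: field_simps)
    moreover have "dist (g x') (g x) \<le> L * dist x' x" using Lg by (simp add: dist_norm)
    moreover have "L * dist x' x \<le> (L+1) * dist x' x" by (simp add: mult_right_mono)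
    ultimately show "dist (g x') (g x) < e" by linarith
  qed
qed

definition picard :: "nat \<Rightarrow> real \<Rightarrow> 'a" where
  "picard n = ((\<lambda>u t. x0 + integral {0..t} (\<lambda>s. g (u s))) ^^ n) (\<lambda>_. x0)"

lemma picard_0: "picard 0 t = x0" by (simp add: picard_def)
lemma picard_Suc: "picard (Suc n) t = x0 + integral {0..t} (\<lambda>s. g (picard n s))"
  by (simp add: picard_def)

lemma comp_cont: "continuous_on S u \<Longrightarrow> continuous_on S (\<lambda>s. g (u s))"
  using continuous_on_compose2[OF g_cont] by auto

lemma picard_cont: "continuous_on {0..} (picard n)"
proof (induction n)
  case 0 then show ?case by (simp add: picard_0)
next
  case (Suc n)
  have "continuous_on {0..} (\<lambda>t. x0 + integral {0..t} (\<lambda>s. g (picard n s)))"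
  proof (rule continuous_on_add[OF continuous_on_const], rule deriv_imp_cont_on)
    fix s :: real assume "s \<in> {0..}"
    show "((\<lambda>t. integral {0..t} (\<lambda>s. g (picard n s))) has_vector_derivative g (picard n s)) (at s within {0..})"
      by (rule indef_int_deriv[of "s+1"]) (use \<open>s \<in> _\<close> comp_cont[OF continuous_on_subset[OF Suc]] in auto)
  qed
  then show ?case by (simp add: picard_Suc[abs_def])
qed

lemma picard_int: "0 \<le> t \<Longrightarrow> (\<lambda>s. g (picard n s)) integrable_on {0..t}"
  by (rule integrable_continuous_real, rule comp_cont, rule continuous_on_subset[OF picard_cont]) auto

lemma picard_est:
  "0 \<le> t \<Longrightarrow> norm (picard (Suc n) t - picard n t) \<le> M * L ^ n * t ^ Suc n / fact (Suc n)"
proof (induction n arbitrary: t)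
  case 0
  have "norm (integral {0..t} (\<lambda>s. g x0)) \<le> integral {0..t} (\<lambda>s. M)"
    by (rule integral_norm_bound_integral) (auto simp: Mg)
  then show ?case using 0 by (simp add: picard_Suc picard_0 algebra_simps)
next
  case (Suc n)
  have "picard (Suc (Suc n)) t - picard (Suc n) t =
     integral {0..t} (\<lambda>s. g (picard (Suc n) s) - g (picard n s))"
    unfolding picard_Suc[of "Suc n" t] picard_Suc[of n t]
    using integral_diff[OF picard_int[OF Suc.prems] picard_int[OF Suc.prems], of "Suc n" n] by simp
  also have "norm \<dots> \<le> integral {0..t} (\<lambda>s. (L * (M * L ^ n / fact (Suc n))) * s ^ Suc n)"
  proof (rule integral_norm_bound_integral)
    show "(\<lambda>s. g (picard (Suc n) s) - g (picard n s)) integrable_on {0..t}"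
      by (intro integrable_diff picard_int Suc.prems)
    show "(\<lambda>s. L * (M * L ^ n / fact (Suc n)) * s ^ Suc n) integrable_on {0..t}"
      by (intro integrable_continuous_real continuous_intros)
    fix s assume s: "s \<in> {0..t}"
    have "norm (g (picard (Suc n) s) - g (picard n s)) \<le> L * norm (picard (Suc n) s - picard n s)"
      by (rule Lg)
    also have "\<dots> \<le> L * (M * L ^ n * s ^ Suc n / fact (Suc n))"
      using Suc.IH[of s] s L0 by (intro mult_left_mono) auto
    finally show "norm (g (picard (Suc n) s) - g (picard n s)) \<le> L * (M * L ^ n / fact (Suc n)) * s ^ Suc n"
      by (simp add: field_simps)
  qed
  also have "\<dots> = (L * (M * L ^ n / fact (Suc n))) * t ^ Suc (Suc n) / Suc (Suc n)"
    by (rule integral_pow_bound[OF Suc.prems])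
  also have "\<dots> = M * L ^ Suc n * t ^ Suc (Suc n) / fact (Suc (Suc n))"
    by (simp add: field_simps)
  finally show ?case .
qed

definition sol :: "real \<Rightarrow> 'a" where
  "sol t = x0 + (\<Sum>k. picard (Suc k) t - picard k t)"

lemma picard_telescope: "picard n t = x0 + (\<Sum>k<n. picard (Suc k) t - picard k t)"
  by (induction n) (auto simp: picard_0)

lemma picard_unif:
  assumes "0 \<le> T"
  shows "uniform_limit {0..T} picard sol sequentially"
proof -
  have bnd: "\<And>n t. t \<in> {0..T} \<Longrightarrow> norm (picard (Suc n) t - picard n t) \<le> M * T * ((L*T) ^ n / fact n)"
  proof -
    fix n t assume t: "t \<in> {0..T}"
    have "norm (picard (Suc n) t - picard n t) \<le> M * L ^ n * t ^ Suc n / fact (Suc n)"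
      using picard_est t by auto
    also have "\<dots> \<le> M * L ^ n * T ^ Suc n / fact (Suc n)"
      using t M0 L0 by (intro divide_right_mono mult_left_mono power_mono) auto
    also have "\<dots> \<le> M * L ^ n * T ^ Suc n / fact n"
      using M0 L0 assms by (intro divide_left_mono mult_nonneg_nonneg) (auto intro!: fact_mono)
    also have "\<dots> = M * T * ((L*T) ^ n / fact n)" by (simp add: power_mult_distrib)
    finally show "norm (picard (Suc n) t - picard n t) \<le> M * T * ((L*T) ^ n / fact n)" .
  qed
  have sm: "summable (\<lambda>n. M * T * ((L*T) ^ n / fact n))"
    using summable_exp[of "L*T"] by (intro summable_mult) (simp add: field_simps)
  have "uniform_limit {0..T} (\<lambda>n t. \<Sum>k<n. picard (Suc k) t - picard k t) (\<lambda>t. \<Sum>k. picard (Suc k) t - picard k t) sequentially"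
    by (rule Weierstrass_m_test[where f="\<lambda>k t. picard (Suc k) t - picard k t" and A="{0..T}"
         and M="\<lambda>n. M * T * ((L*T) ^ n / fact n)", OF bnd sm])
  then have "uniform_limit {0..T} (\<lambda>n t. x0 + (\<Sum>k<n. picard (Suc k) t - picard k t)) (\<lambda>t. x0 + (\<Sum>k. picard (Suc k) t - picard k t)) sequentially"
    by (simp add: uniform_limit_iff dist_add_cancel)
  then show ?thesis
    by (subst uniform_limit_cong'[where g="\<lambda>n t. x0 + (\<Sum>k<n. picard (Suc k) t - picard k t)"
          and i="\<lambda>t. x0 + (\<Sum>k. picard (Suc k) t - picard k t)"])
       (auto intro: picard_telescope simp: sol_def)
qed

lemma sol_cont: "0 \<le> T \<Longrightarrow> continuous_on {0..T} sol"
proof -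
  assume T: "0 \<le> T"
  have c: "\<forall>\<^sub>F n in sequentially. continuous_on {0..T} (picard n)"
    by (rule always_eventually) (auto intro: continuous_on_subset[OF picard_cont])
  show ?thesis by (rule uniform_limit_theorem[OF c picard_unif[OF T]]) simp
qed

lemma sol_int_eq:
  assumes t: "0 \<le> t"
  shows "sol t = x0 + integral {0..t} (\<lambda>s. g (sol s))"
proof -
  have ul: "uniform_limit {0..t} picard sol sequentially" by (rule picard_unif[OF t])
  have lim1: "(\<lambda>n. picard (Suc n) t) \<longlonglongrightarrow> sol t"
    using tendsto_uniform_limitI[OF ul, of t] t LIMSEQ_Suc by auto
  have cs: "continuous_on {0..t} (\<lambda>s. g (sol s))" by (rule comp_cont[OF sol_cont[OF t]])
  have lim2: "(\<lambda>n. picard (Suc n) t) \<longlonglongrightarrow> x0 + integral {0..t} (\<lambda>s. g (sol s))"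
  proof (rule LIMSEQ_I)
    fix e :: real assume e: "e > 0"
    define e' where "e' = e / (L * t + 1)"
    have e': "e' > 0" using e L0 t by (auto simp: e'_def intro!: divide_pos_pos add_nonneg_pos)
    obtain N where N: "\<And>n s. n \<ge> N \<Longrightarrow> s \<in> {0..t} \<Longrightarrow> dist (picard n s) (sol s) < e'"
      using ul e' unfolding uniform_limit_sequentially_iff by blast
    show "\<exists>N. \<forall>n\<ge>N. norm (picard (Suc n) t - (x0 + integral {0..t} (\<lambda>s. g (sol s)))) < e"
    proof (intro exI[of _ N] allI impI)
      fix n assume n: "n \<ge> N"
      have "picard (Suc n) t - (x0 + integral {0..t} (\<lambda>s. g (sol s))) =
            integral {0..t} (\<lambda>s. g (picard n s) - g (sol s))"
        by (simp add: picard_Suc integral_diff picard_int t integrable_continuous_real[OF cs])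
      also have "norm \<dots> \<le> integral {0..t} (\<lambda>s. L * e')"
      proof (rule integral_norm_bound_integral)
        show "(\<lambda>s. g (picard n s) - g (sol s)) integrable_on {0..t}"
          by (intro integrable_diff picard_int t integrable_continuous_real[OF cs])
        fix s assume s: "s \<in> {0..t}"
        have "norm (g (picard n s) - g (sol s)) \<le> L * norm (picard n s - sol s)" by (rule Lg)
        also have "\<dots> \<le> L * e'" using N[OF n s] L0 by (intro mult_left_mono) (auto simp: dist_norm)
        finally show "norm (g (picard n s) - g (sol s)) \<le> L * e'" .
      qed auto
      also have "\<dots> = t * (L * e')" using t by simp
      also have "\<dots> < e"
      proof -
        have "t * (L * e') = e * (L * t) / (L * t + 1)" by (simp add: e'_def field_simps)
        also have "\<dots> < e"
        proof -
          have p: "0 < L * t + 1" using L0 t by (simp add: add_nonneg_pos)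
          show ?thesis using e p by (simp add: divide_less_eq algebra_simps)
        qed
        finally show ?thesis .
      qed
      finally show "norm (picard (Suc n) t - (x0 + integral {0..t} (\<lambda>s. g (sol s)))) < e" .
    qed
  qed
  show ?thesis using LIMSEQ_unique[OF lim1 lim2] .
qed

lemma sol_0: "sol 0 = x0" using sol_int_eq[of 0] by simp

lemma sol_deriv:
  assumes "0 \<le> s"
  shows "(sol has_vector_derivative g (sol s)) (at s within {0..})"
proof -
  have cs: "continuous_on {0..s+1} (\<lambda>s. g (sol s))" by (rule comp_cont[OF sol_cont]) (use assms in auto)
  have "((\<lambda>t. x0 + integral {0..t} (\<lambda>s. g (sol s))) has_vector_derivative g (sol s)) (at s within {0..})"
    using indef_int_deriv[OF cs assms] by (intro derivative_eq_intros) auto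
  then show ?thesis
    by (rule has_vector_derivative_transform[rotated 2]) (auto simp: sol_int_eq assms)
qed

end

lemma lipschitz_global_solution:
  fixes g :: "'a::banach \<Rightarrow> 'a"
  assumes "\<And>p q. norm (g p - g q) \<le> L * norm (p - q)" "\<And>p. norm (g p) \<le> M" "L \<ge> 0"
  shows "\<exists>u. u 0 = x0 \<and> (\<forall>s\<ge>0. (u has_vector_derivative g (u s)) (at s within {0..}))"
  using sol_0[OF assms] sol_deriv[OF assms] by blast



lemma norm3: "norm ((x::real),(y::real),(z::real)) = sqrt(x^2+y^2+z^2)"
  by (simp add: norm_Pair)

lemma norm3_le: "norm ((x::real),(y::real),(z::real)) \<le> \<bar>x\<bar> + \<bar>y\<bar> + \<bar>z\<bar>"
proof -
  have "norm (x,y,z) \<le> norm x + norm (y,z)" by (rule norm_Pair_le)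
  also have "norm (y,z) \<le> norm y + norm z" by (rule norm_Pair_le)
  finally show ?thesis by simp
qed

lemma comp_le_norm:
  fixes p :: R3
  shows "\<bar>fst p\<bar> \<le> norm p" "\<bar>fst (snd p)\<bar> \<le> norm p" "\<bar>snd (snd p)\<bar> \<le> norm p"
proof -
  have a: "norm (fst q) \<le> norm q" "norm (snd q) \<le> norm q" for q :: "'x::real_normed_vector \<times> 'y::real_normed_vector"
    using norm_fst_le[of "fst q" "snd q"] norm_snd_le[of "snd q" "fst q"] by auto
  show "\<bar>fst p\<bar> \<le> norm p" using a(1)[of p] by simp
  show "\<bar>fst (snd p)\<bar> \<le> norm p" using a(1)[of "snd p"] a(2)[of p] by simp
  show "\<bar>snd (snd p)\<bar> \<le> norm p" using a(2)[of "snd p"] a(2)[of p] by simp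
qed

lemma lorenz_simp: "lorenz (s,b,r) (x,y,z) = (- s * x + s * y, r * x - y - x * z, - b * z + x * y)"
  by (simp add: lorenz_def)

lemma pos_paramsD: "(s,b,r) \<in> pos_params \<Longrightarrow> s > 0 \<and> b > 0 \<and> r > 0"
  by (simp add: pos_params_def)

definition cen :: "R3 \<Rightarrow> R3" where "cen lam = (0, 0, fst lam + snd (snd lam))"
definition aco :: "R3 \<Rightarrow> real" where "aco lam = min (min (2 * fst lam) 2) (fst (snd lam))"
definition Bco :: "R3 \<Rightarrow> real" where "Bco lam = fst (snd lam) * (fst lam + snd (snd lam))^2"
definition Lip :: "R3 \<Rightarrow> real \<Rightarrow> real" where
  "Lip lam R = 2 * fst lam + snd (snd lam) + 1 + fst (snd lam) + 4 * R"

lemma aco_pos: "lam \<in> pos_params \<Longrightarrow> aco lam > 0"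
  by (cases lam) (auto simp: aco_def pos_params_def)

lemma Bco_nonneg: "lam \<in> pos_params \<Longrightarrow> Bco lam \<ge> 0"
  by (cases lam) (auto simp: Bco_def pos_params_def)

lemma dV:
  assumes "lam \<in> pos_params"
  shows "2 * ((p - cen lam) \<bullet> lorenz lam p) \<le> - aco lam * (norm (p - cen lam))^2 + Bco lam"
proof -
  obtain s b r where l: "lam = (s,b,r)" by (cases lam)
  obtain x y z where pp: "p = (x,y,z)" by (cases p)
  have pos: "s > 0" "b > 0" "r > 0" using assms l by (auto simp: pos_params_def)
  define c where "c = s + r"
  define a where "a = min (min (2 * s) 2) b"
  have a: "a \<le> 2 * s" "a \<le> 2" "a \<le> b" "a > 0" using pos by (auto simp: a_def)
  have n2: "(norm (p - cen lam))^2 = x^2 + y^2 + (z - c)^2"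
    by (simp add: pp l cen_def norm3 c_def)
  have i: "2 * ((p - cen lam) \<bullet> lorenz lam p) = -2 * s * x^2 - 2 * y^2 - 2 * b * z^2 + 2 * b * c*z"
    by (simp add: pp l cen_def lorenz_simp c_def power2_eq_square algebra_simps)
  have e: "-2 * b * z^2 + 2 * b * c*z = - b * z^2 - b*(z-c)^2 + b * c^2"
    by (simp add: power2_eq_square algebra_simps)
  have "-2 * s * x^2 \<le> -a * x^2" using a by (simp add: mult_right_mono)
  moreover have "-2 * y^2 \<le> -a * y^2" using a by (simp add: mult_right_mono)
  moreover have "-b*(z-c)^2 \<le> -a*(z-c)^2" using a by (simp add: mult_right_mono)
  moreover have "- b * z^2 \<le> 0" using pos by simp
  ultimately have "2 * ((p - cen lam) \<bullet> lorenz lam p) \<le> -a*(x^2+y^2+(z-c)^2) + b * c^2"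
    using i e by (simp add: algebra_simps)
  then show ?thesis unfolding n2 by (simp add: aco_def Bco_def l a_def c_def)
qed

lemma lorenz_lip:
  assumes "lam \<in> pos_params" "norm p \<le> R" "norm q \<le> R"
  shows "norm (lorenz lam p - lorenz lam q) \<le> Lip lam R * norm (p - q)"
proof -
  obtain s b r where l: "lam = (s,b,r)" by (cases lam)
  obtain x1 y1 z1 where pp: "p = (x1,y1,z1)" by (cases p)
  obtain x2 y2 z2 where qq: "q = (x2,y2,z2)" by (cases q)
  have pos: "s > 0" "b > 0" "r > 0" using assms l by (auto simp: pos_params_def)
  define n where "n = norm (p - q)"
  have d: "\<bar>x1 - x2\<bar> \<le> n" "\<bar>y1 - y2\<bar> \<le> n" "\<bar>z1 - z2\<bar> \<le> n"
    using comp_le_norm[of "p - q"] by (auto simp: n_def pp qq)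
  have R: "\<bar>x1\<bar> \<le> R" "\<bar>y1\<bar> \<le> R" "\<bar>z1\<bar> \<le> R" "\<bar>x2\<bar> \<le> R" "\<bar>y2\<bar> \<le> R" "\<bar>z2\<bar> \<le> R"
    using comp_le_norm[of p] comp_le_norm[of q] assms(2,3) by (auto simp: pp qq)
  have n0: "n \<ge> 0" by (simp add: n_def)
  have prod: "\<bar>u * v\<bar> \<le> R * n" if "\<bar>u\<bar> \<le> R" "\<bar>v\<bar> \<le> n" for u v
    using that by (simp add: abs_mult mult_mono')
  have prod': "\<bar>u * v\<bar> \<le> R * n" if "\<bar>u\<bar> \<le> n" "\<bar>v\<bar> \<le> R" for u v
    using prod[OF that(2,1)] by (simp add: mult.commute)
  have c1: "\<bar>- s * x1 + s * y1 - (- s * x2 + s * y2)\<bar> \<le> 2 * s * n"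
  proof -
    have "- s * x1 + s * y1 - (- s * x2 + s * y2) = s * (y1 - y2) - s * (x1 - x2)" by (simp add: algebra_simps)
    also have "\<bar>\<dots>\<bar> \<le> s * \<bar>y1 - y2\<bar> + s * \<bar>x1 - x2\<bar>" using pos by (simp add: abs_mult abs_triangle_ineq4[THEN order_trans])
    also have "\<dots> \<le> s * n + s * n" using d pos by (intro add_mono mult_left_mono) auto
    finally show ?thesis by (simp add: algebra_simps)
  qed
  have c2: "\<bar>r * x1 - y1 - x1 * z1 - (r * x2 - y2 - x2 * z2)\<bar> \<le> r * n + n + 2 * R * n"
  proof -
    have "r * x1 - y1 - x1 * z1 - (r * x2 - y2 - x2 * z2) = r * (x1 - x2) - (y1 - y2) - ((x1 - x2) * z1) - x2 * (z1 - z2)"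
      by (simp add: algebra_simps)
    also have "\<bar>\<dots>\<bar> \<le> \<bar>r * (x1 - x2)\<bar> + \<bar>y1 - y2\<bar> + \<bar>(x1 - x2) * z1\<bar> + \<bar>x2 * (z1 - z2)\<bar>" by linarith
    also have "\<dots> \<le> r * n + n + R * n + R * n"
      using d pos prod[OF R(4) d(3)] prod'[OF d(1) R(3)] by (intro add_mono) (auto simp: abs_mult)
    finally show ?thesis by simp
  qed
  have c3: "\<bar>- b * z1 + x1 * y1 - (- b * z2 + x2 * y2)\<bar> \<le> b * n + 2 * R * n"
  proof -
    have "- b * z1 + x1 * y1 - (- b * z2 + x2 * y2) = - b * (z1 - z2) + (x1 - x2) * y1 + x2 * (y1 - y2)"
      by (simp add: algebra_simps)
    also have "\<bar>\<dots>\<bar> \<le> \<bar>b * (z1 - z2)\<bar> + \<bar>(x1 - x2) * y1\<bar> + \<bar>x2 * (y1 - y2)\<bar>" by linarith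
    also have "\<dots> \<le> b * n + R * n + R * n"
      using d pos prod[OF R(4) d(2)] prod'[OF d(1) R(2)] by (intro add_mono) (auto simp: abs_mult)
    finally show ?thesis by simp
  qed
  have "norm (lorenz lam p - lorenz lam q) \<le> 2 * s * n + (r * n + n + 2 * R * n) + (b * n + 2 * R * n)"
    using norm3_le[of "- s * x1 + s * y1 - (- s * x2 + s * y2)" "r * x1 - y1 - x1 * z1 - (r * x2 - y2 - x2 * z2)"
       "- b * z1 + x1 * y1 - (- b * z2 + x2 * y2)"] c1 c2 c3
    by (simp add: l pp qq lorenz_simp)
  also have "\<dots> = Lip lam R * n" by (simp add: Lip_def l algebra_simps)
  finally show ?thesis by (simp add: n_def)
qed

lemma lorenz_0: "lorenz lam 0 = 0"
  by (cases lam) (simp add: lorenz_def zero_prod_def)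

lemma lorenz_param:
  assumes "norm p \<le> R"
  shows "norm (lorenz lam p - lorenz mu p) \<le> 4 * R * dist lam mu"
proof -
  obtain s b r where l: "lam = (s,b,r)" by (cases lam)
  obtain s' b' r' where m: "mu = (s',b',r')" by (cases mu)
  obtain x y z where pp: "p = (x,y,z)" by (cases p)
  define D where "D = dist lam mu"
  have d: "\<bar>s - s'\<bar> \<le> D" "\<bar>b - b'\<bar> \<le> D" "\<bar>r - r'\<bar> \<le> D"
    using comp_le_norm[of "lam - mu"] by (auto simp: D_def dist_norm l m)
  have R: "\<bar>x\<bar> \<le> R" "\<bar>y\<bar> \<le> R" "\<bar>z\<bar> \<le> R"
    using comp_le_norm[of p] assms by (auto simp: pp)
  have D0: "D \<ge> 0" by (simp add: D_def)
  have prod: "\<bar>u * v\<bar> \<le> D * R" if "\<bar>u\<bar> \<le> D" "\<bar>v\<bar> \<le> R" for u v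
    using that by (simp add: abs_mult mult_mono')
  have "lorenz lam p - lorenz mu p = ((s - s') * y - (s - s') * x, (r - r') * x, - ((b - b') * z))"
    by (simp add: l m pp lorenz_simp algebra_simps)
  then have "norm (lorenz lam p - lorenz mu p) \<le> \<bar>(s - s') * y - (s - s') * x\<bar> + \<bar>(r - r') * x\<bar> + \<bar>(b - b') * z\<bar>"
    using norm3_le[of "(s - s') * y - (s - s') * x" "(r - r') * x" "- ((b - b') * z)"] by simp
  also have "\<dots> \<le> (D * R + D * R) + D * R + D * R"
    using prod[OF d(1) R(2)] prod[OF d(1) R(1)] prod[OF d(3) R(1)] prod[OF d(2) R(3)]
    by (intro add_mono) linarith+
  finally show ?thesis by (simp add: D_def algebra_simps)
qed

lemma norm_sq_deriv:
  fixes u :: "real \<Rightarrow> 'a::real_inner"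
  assumes "(u has_vector_derivative u') (at t within S)"
  shows "((\<lambda>t. (norm (u t - c))^2) has_real_derivative 2 * ((u t - c) \<bullet> u')) (at t within S)"
proof -
  have d: "((\<lambda>t. u t - c) has_derivative (\<lambda>h. h *\<^sub>R u')) (at t within S)"
    using assms unfolding has_vector_derivative_def by (intro derivative_eq_intros) auto
  have "((\<lambda>t. (u t - c) \<bullet> (u t - c)) has_derivative
      (\<lambda>h. (u t - c) \<bullet> (h *\<^sub>R u') + (h *\<^sub>R u') \<bullet> (u t - c))) (at t within S)"
    by (rule has_derivative_inner[OF d d])
  then have "((\<lambda>t. (u t - c) \<bullet> (u t - c)) has_derivative (\<lambda>h. (2 * ((u t - c) \<bullet> u')) * h)) (at t within S)"
    by (rule has_derivative_eq_rhs) (auto simp: inner_commute algebra_simps intro!: ext)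
  then have "((\<lambda>t. (norm (u t - c))^2) has_derivative (\<lambda>h. (2 * ((u t - c) \<bullet> u')) * h)) (at t within S)"
    by (simp add: power2_norm_eq_inner)
  then show ?thesis by (simp add: has_field_derivative_def)
qed



lemma at_within_pos: "(x::real) > 0 \<Longrightarrow> at x within {0..} = at x"
  by (rule at_within_nhd[of _ "{0<..}"]) auto

lemma decr_on:
  fixes \<phi> :: "real \<Rightarrow> real"
  assumes d: "\<And>x. x \<in> {0..T} \<Longrightarrow> (\<phi> has_real_derivative \<phi>' x) (at x within {0..})"
    and n: "\<And>x. x \<in> {0..T} \<Longrightarrow> \<phi>' x \<le> 0"
    and st: "0 \<le> s" "s \<le> t" "t \<le> T"
  shows "\<phi> t \<le> \<phi> s"
proof (rule DERIV_nonpos_imp_decreasing_open[OF st(2)])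
  fix x assume x: "s < x" "x < t"
  then have "(\<phi> has_real_derivative \<phi>' x) (at x)" using d[of x] st at_within_pos[of x] by auto
  then show "\<exists>y. (\<phi> has_real_derivative y) (at x) \<and> y \<le> 0" using n[of x] x st by auto
next
  have "continuous (at x within {0..}) \<phi>" if "x \<in> {s..t}" for x
    using d[of x] that st by (auto intro: DERIV_continuous)
  then show "continuous_on {s..t} \<phi>"
    unfolding continuous_on_eq_continuous_within
    using st continuous_within_subset[of _ "{0..}" \<phi> "{s..t}"] by auto
qed

lemma stay_below:
  fixes \<phi> :: "real \<Rightarrow> real"
  assumes d: "\<And>x. x \<ge> 0 \<Longrightarrow> (\<phi> has_real_derivative \<phi>' x) (at x within {0..})"
    and n: "\<And>x. x \<ge> 0 \<Longrightarrow> \<phi> x \<ge> K \<Longrightarrow> \<phi>' x \<le> 0"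
    and i: "\<phi> 0 \<le> K" and t: "t \<ge> 0"
  shows "\<phi> t \<le> K"
proof (rule ccontr)
  assume "\<not> \<phi> t \<le> K"
  then have t1: "\<phi> t > K" by simp
  have cont: "continuous_on {0..} \<phi>"
    using d by (auto simp: continuous_on_eq_continuous_within intro: DERIV_continuous)
  define S where "S = {x \<in> {0..t}. \<phi> x \<le> K}"
  have "closed S" unfolding S_def
    by (rule continuous_on_closed_Collect_le) (auto intro: continuous_on_subset[OF cont])
  moreover have "S \<noteq> {}" using i t by (auto simp: S_def)
  moreover have "bdd_above S" by (auto simp: S_def bdd_above_def)
  ultimately have "Sup S \<in> S" by (rule closed_contains_Sup[rotated 2])
  define s0 where "s0 = Sup S"
  have s0: "0 \<le> s0" "s0 \<le> t" "\<phi> s0 \<le> K" using \<open>Sup S \<in> S\<close> by (auto simp: S_def s0_def)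
  have above: "\<phi> x > K" if "s0 < x" "x \<le> t" for x
  proof (rule ccontr)
    assume "\<not> \<phi> x > K"
    then have "x \<in> S" using that s0 by (auto simp: S_def)
    then have "x \<le> s0" unfolding s0_def using \<open>bdd_above S\<close> by (rule cSup_upper)
    then show False using that by simp
  qed
  have "\<phi> t \<le> \<phi> s0"
  proof (rule DERIV_nonpos_imp_decreasing_open[OF s0(2)])
    fix x assume x: "s0 < x" "x < t"
    then have "(\<phi> has_real_derivative \<phi>' x) (at x)" using d[of x] s0 at_within_pos[of x] by auto
    moreover have "\<phi>' x \<le> 0" using n[of x] above[of x] x s0 by auto
    ultimately show "\<exists>y. (\<phi> has_real_derivative y) (at x) \<and> y \<le> 0" by blast
  next
    show "continuous_on {s0..t} \<phi>" using s0 by (auto intro: continuous_on_subset[OF cont])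
  qed
  then show False using t1 s0 by simp
qed


lemma proj_ball:
  fixes x c :: R3
  assumes r: "\<rho> > 0" and n: "norm (x - c) > \<rho>"
  shows "closest_point (cball c \<rho>) x = c + (\<rho> / norm (x - c)) *\<^sub>R (x - c)"
proof (rule closest_point_unique[symmetric])
  define m where "m = norm (x - c)"
  have m: "m > 0" "m > \<rho>" using r n by (auto simp: m_def)
  have nq: "norm ((\<rho> / m) *\<^sub>R (x - c)) = \<rho>" using m r by (simp add: m_def)
  show "c + (\<rho> / norm (x - c)) *\<^sub>R (x - c) \<in> cball c \<rho>"
    using nq by (simp add: m_def dist_norm)
  have dq: "dist x (c + (\<rho> / m) *\<^sub>R (x - c)) = m - \<rho>"
  proof -
    have eq: "x - (c + (\<rho> / m) *\<^sub>R (x - c)) = (1 - \<rho> / m) *\<^sub>R (x - c)" by (simp add: algebra_simps)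
    have "dist x (c + (\<rho> / m) *\<^sub>R (x - c)) = norm ((1 - \<rho> / m) *\<^sub>R (x - c))"
      by (simp only: dist_norm eq)
    also have "\<dots> = \<bar>1 - \<rho>/m\<bar> * m" by (simp add: m_def)
    also have "\<dots> = m - \<rho>" using m by (simp add: field_simps)
    finally show ?thesis .
  qed
  show "\<forall>z\<in>cball c \<rho>. dist x (c + (\<rho> / norm (x - c)) *\<^sub>R (x - c)) \<le> dist x z"
  proof
    fix z assume "z \<in> cball c \<rho>"
    then have "dist c z \<le> \<rho>" by simp
    moreover have "dist x c \<le> dist x z + dist z c" by (rule dist_triangle)
    ultimately show "dist x (c + (\<rho> / norm (x - c)) *\<^sub>R (x - c)) \<le> dist x z"
      using dq by (simp add: m_def dist_norm norm_minus_commute)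
  qed
qed auto

lemma lyap:
  assumes lam: "lam \<in> pos_params" and u: "lorenz_solution lam u" and t: "t \<ge> 0"
  shows "(norm (u t - cen lam))^2 \<le> exp (- aco lam * t) * ((norm (u 0 - cen lam))^2 - Bco lam / aco lam) + Bco lam / aco lam"
proof -
  define a where "a = aco lam"
  define B where "B = Bco lam"
  define c where "c = cen lam"
  define \<phi> where "\<phi> s = (norm (u s - c))^2" for s
  have a: "a > 0" using aco_pos[OF lam] by (simp add: a_def)
  have d\<phi>: "(\<phi> has_real_derivative 2 * ((u s - c) \<bullet> lorenz lam (u s))) (at s within {0..})" if "s \<ge> 0" for s
    unfolding \<phi>_def[abs_def]
    by (rule norm_sq_deriv) (use u that in \<open>auto simp: lorenz_solution_def\<close>)
  define E where "E s = exp (a * s) * (a * (\<phi> s - B/a) + 2 * ((u s - c) \<bullet> lorenz lam (u s)))" for s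
  have dpsi: "((\<lambda>s. exp (a * s) * (\<phi> s - B/a)) has_real_derivative E s) (at s within {0..})" if "s \<ge> 0" for s
    unfolding E_def using d\<phi>[OF that] by (auto intro!: derivative_eq_intros simp: algebra_simps)
  have En: "E s \<le> 0" for s
  proof -
    have "2 * ((u s - c) \<bullet> lorenz lam (u s)) \<le> - a * \<phi> s + B"
      using dV[OF lam, of "u s"] by (simp add: a_def B_def c_def \<phi>_def)
    then have "a * (\<phi> s - B/a) + 2 * ((u s - c) \<bullet> lorenz lam (u s)) \<le> 0"
      using a by (simp add: algebra_simps)
    then show ?thesis unfolding E_def by (simp add: mult_nonneg_nonpos)
  qed
  have "exp (a * t) * (\<phi> t - B/a) \<le> exp (a * 0) * (\<phi> 0 - B/a)"
    by (rule decr_on[where T=t and \<phi>'=E]) (use dpsi En t in auto)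
  then have "\<phi> t - B/a \<le> exp (- a * t) * (\<phi> 0 - B/a)"
    by (simp add: exp_minus field_simps)
  then show ?thesis by (simp add: \<phi>_def a_def B_def c_def)
qed

lemma lyap_simple:
  assumes lam: "lam \<in> pos_params" and u: "lorenz_solution lam u" and t: "t \<ge> 0"
  shows "(norm (u t - cen lam))^2 \<le> (norm (u 0 - cen lam))^2 + Bco lam / aco lam"
proof -
  define V0 where "V0 = (norm (u 0 - cen lam))^2 - Bco lam / aco lam"
  have e: "exp (- aco lam * t) \<le> 1" "exp (- aco lam * t) > 0" using t aco_pos[OF lam] by auto
  have "exp (- aco lam * t) * V0 \<le> (norm (u 0 - cen lam))^2"
  proof (cases "V0 \<ge> 0")
    case True
    then have "exp (- aco lam * t) * V0 \<le> 1 * V0" using e by (intro mult_right_mono) auto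
    also have "\<dots> \<le> (norm (u 0 - cen lam))^2"
      using Bco_nonneg[OF lam] aco_pos[OF lam] by (simp add: V0_def)
    finally show ?thesis .
  next
    case False
    have "exp (- aco lam * t) * V0 \<le> 0" using e(2) False by (intro mult_nonneg_nonpos) auto
    then show ?thesis by (meson order_trans zero_le_power2)
  qed
  then show ?thesis using lyap[OF assms] by (simp add: V0_def)
qed


lemma Lip_nonneg: "lam \<in> pos_params \<Longrightarrow> R \<ge> 0 \<Longrightarrow> Lip lam R \<ge> 0"
  by (cases lam) (auto simp: Lip_def pos_params_def)

lemma lorenz_exists:
  assumes lam: "lam \<in> pos_params"
  shows "\<exists>u. lorenz_solution lam u \<and> u 0 = x0"
proof -
  define c where "c = cen lam"
  define a where "a = aco lam"
  define B where "B = Bco lam"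
  have a: "a > 0" using aco_pos[OF lam] by (simp add: a_def)
  have B: "B \<ge> 0" using Bco_nonneg[OF lam] by (simp add: B_def)
  define \<rho> where "\<rho> = norm (x0 - c) + sqrt (B/a) + 1"
  have "sqrt (B/a) \<ge> 0" using a B by simp
  then have \<rho>0: "\<rho> > 0" unfolding \<rho>_def using norm_ge_zero[of "x0 - c"] by linarith
  have "sqrt (B/a) \<le> \<rho>" by (simp add: \<rho>_def)
  then have "(sqrt (B/a))^2 \<le> \<rho>^2" using a B by (intro power_mono) auto
  then have \<rho>B: "B/a \<le> \<rho>^2" using a B by simp
  have x0K: "norm (x0 - c) \<le> \<rho>" using \<open>sqrt (B/a) \<ge> 0\<close> by (simp add: \<rho>_def)
  define K where "K = cball c \<rho>"
  define pr where "pr = closest_point K"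
  have Kc: "convex K" "closed K" "K \<noteq> {}" using \<rho>0 by (auto simp: K_def)
  have prK: "pr p \<in> K" for p unfolding pr_def by (rule closest_point_in_set[OF Kc(2,3)])
  define R where "R = norm c + \<rho>"
  have R0: "R \<ge> 0" using \<rho>0 by (simp add: R_def)
  have prR: "norm (pr p) \<le> R" for p
  proof -
    have "norm (pr p) \<le> norm c + norm (pr p - c)" by (metis add_diff_cancel_left' diff_add_cancel norm_triangle_ineq)
    also have "norm (pr p - c) \<le> \<rho>" using prK[of p] by (simp add: K_def dist_norm norm_minus_commute)
    finally show ?thesis by (simp add: R_def)
  qed
  define g where "g p = lorenz lam (pr p)" for p
  have LL: "Lip lam R \<ge> 0" by (rule Lip_nonneg[OF lam R0])
  have Lg: "norm (g p - g q) \<le> Lip lam R * norm (p - q)" for p q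
  proof -
    have "norm (g p - g q) \<le> Lip lam R * norm (pr p - pr q)"
      unfolding g_def by (rule lorenz_lip[OF lam prR prR])
    also have "norm (pr p - pr q) \<le> norm (p - q)"
      using closest_point_lipschitz[OF Kc, of p q] by (simp add: pr_def dist_norm)
    finally show ?thesis using LL by (simp add: mult_left_mono)
  qed
  have Mg: "norm (g p) \<le> Lip lam R * R" for p
  proof -
    have "norm (g p - lorenz lam 0) \<le> Lip lam R * norm (pr p - 0)"
      unfolding g_def by (rule lorenz_lip[OF lam prR]) (use R0 in simp)
    also have "\<dots> \<le> Lip lam R * R" using prR[of p] LL by (simp add: mult_left_mono)
    finally show ?thesis by (simp add: lorenz_0)
  qed
  obtain u where u0: "u 0 = x0" and ud: "\<And>s. s \<ge> 0 \<Longrightarrow> (u has_vector_derivative g (u s)) (at s within {0..})"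
    using lipschitz_global_solution[OF Lg Mg LL, of x0] by blast
  define \<phi> where "\<phi> s = (norm (u s - c))^2" for s
  have d\<phi>: "(\<phi> has_real_derivative 2 * ((u s - c) \<bullet> g (u s))) (at s within {0..})" if "s \<ge> 0" for s
    unfolding \<phi>_def[abs_def] by (rule norm_sq_deriv[OF ud[OF that]])
  have npos: "2 * ((u s - c) \<bullet> g (u s)) \<le> 0" if "\<phi> s \<ge> \<rho>^2" for s
  proof (cases "norm (u s - c) \<le> \<rho>")
    case True
    then have "u s \<in> K" by (simp add: K_def dist_norm norm_minus_commute)
    then have "g (u s) = lorenz lam (u s)" by (simp add: g_def pr_def closest_point_self)
    then have "2 * ((u s - c) \<bullet> g (u s)) \<le> - a * \<phi> s + B"
      using dV[OF lam, of "u s"] by (simp add: a_def B_def c_def \<phi>_def)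
    also have "\<dots> \<le> - a * \<rho>^2 + B" using that a by simp
    also have "\<dots> \<le> 0" using \<rho>B a by (simp add: field_simps)
    finally show ?thesis .
  next
    case False
    define m where "m = norm (u s - c)"
    have m: "m > \<rho>" using False by (simp add: m_def)
    define q where "q = c + (\<rho> / m) *\<^sub>R (u s - c)"
    have pq: "pr (u s) = q" using proj_ball[OF \<rho>0, of "u s" c] m
      by (simp add: pr_def K_def q_def m_def)
    have usc: "u s \<noteq> c" using m \<rho>0 by (auto simp: m_def)
    have qc: "norm (q - c) = \<rho>" using m \<rho>0 usc by (simp add: q_def m_def)
    from usc have us: "u s - c = (m / \<rho>) *\<^sub>R (q - c)" using m \<rho>0 by (simp add: q_def)
    have "2 * ((q - c) \<bullet> lorenz lam q) \<le> - a * \<rho>^2 + B"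
      using dV[OF lam, of q] qc by (simp add: a_def B_def c_def)
    also have "\<dots> \<le> 0" using \<rho>B a by (simp add: field_simps)
    finally have "2 * ((q - c) \<bullet> lorenz lam q) \<le> 0" .
    moreover have "2 * ((u s - c) \<bullet> g (u s)) = (m / \<rho>) * (2 * ((q - c) \<bullet> lorenz lam q))"
      by (simp add: g_def pq us)
    moreover have "m / \<rho> \<ge> 0" using m \<rho>0 by simp
    ultimately show ?thesis by (metis mult_nonneg_nonpos)
  qed
  have stay: "\<phi> s \<le> \<rho>^2" if "s \<ge> 0" for s
  proof (rule stay_below[where \<phi>=\<phi> and \<phi>'="\<lambda>s. 2 * ((u s - c) \<bullet> g (u s))"])
    show "\<phi> 0 \<le> \<rho>^2" using x0K u0 by (auto simp: \<phi>_def intro: power_mono)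
  qed (use d\<phi> npos that in auto)
  have gu: "g (u s) = lorenz lam (u s)" if "s \<ge> 0" for s
  proof -
    have "norm (u s - c) \<le> \<rho>" using stay[OF that] \<rho>0
      by (simp add: \<phi>_def power2_le_iff_abs_le)
    then have "u s \<in> K" by (simp add: K_def dist_norm norm_minus_commute)
    then show ?thesis by (simp add: g_def pr_def closest_point_self)
  qed
  have "lorenz_solution lam u" unfolding lorenz_solution_def using ud gu by auto
  then show ?thesis using u0 by blast
qed



definition Rad :: "R3 \<Rightarrow> real \<Rightarrow> real" where
  "Rad lam R0 = norm (cen lam) + sqrt ((R0 + norm (cen lam))^2 + Bco lam / aco lam)"

lemma sol_bound:
  assumes lam: "lam \<in> pos_params" and u: "lorenz_solution lam u" and u0: "norm (u 0) \<le> R0" and t: "t \<ge> 0"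
  shows "norm (u t) \<le> Rad lam R0"
proof -
  define c where "c = cen lam"
  have "norm (u 0 - c) \<le> R0 + norm c"
    using norm_triangle_ineq4[of "u 0" c] u0 by simp
  then have "(norm (u 0 - c))^2 \<le> (R0 + norm c)^2" by (intro power_mono) auto
  then have "(norm (u t - c))^2 \<le> (R0 + norm c)^2 + Bco lam / aco lam"
    using lyap_simple[OF lam u t] by (simp add: c_def)
  then have "sqrt ((norm (u t - c))^2) \<le> sqrt ((R0 + norm c)^2 + Bco lam / aco lam)"
    using real_sqrt_le_mono by blast
  then have "norm (u t - c) \<le> sqrt ((R0 + norm c)^2 + Bco lam / aco lam)" by simp
  moreover have "norm (u t) \<le> norm c + norm (u t - c)"
    by (metis add_diff_cancel_left' diff_add_cancel norm_triangle_ineq)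
  ultimately show ?thesis by (simp add: Rad_def c_def)
qed

lemma compare:
  assumes lam: "lam \<in> pos_params" and u: "lorenz_solution lam u" and v: "lorenz_solution mu v"
    and bd: "\<And>s. s \<in> {0..T} \<Longrightarrow> norm (u s) \<le> R \<and> norm (v s) \<le> R"
    and t: "t \<in> {0..T}" and R0: "R \<ge> 0"
  shows "(norm (u t - v t))^2 \<le> exp ((2 * Lip lam R + 1) * t) * ((norm (u 0 - v 0))^2 + (4 * R * dist lam mu)^2 * t)"
proof -
  define C where "C = 2 * Lip lam R + 1"
  define E where "E = (4 * R * dist lam mu)^2"
  have C0: "C \<ge> 0" using Lip_nonneg[OF lam R0] by (simp add: C_def)
  have E0: "E \<ge> 0" by (simp add: E_def)
  define w where "w s = (norm ((u s - v s) - 0))^2" for s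
  define w' where "w' s = 2 * (((u s - v s) - 0) \<bullet> (lorenz lam (u s) - lorenz mu (v s)))" for s
  have dw: "(w has_real_derivative w' s) (at s within {0..})" if "s \<ge> 0" for s
  proof -
    have "((\<lambda>s. u s - v s) has_vector_derivative (lorenz lam (u s) - lorenz mu (v s))) (at s within {0..})"
      using u v that unfolding lorenz_solution_def by (intro has_vector_derivative_diff) auto
    then show ?thesis unfolding w_def[abs_def] w'_def by (rule norm_sq_deriv)
  qed
  have w'b: "w' s \<le> C * w s + E" if s: "s \<in> {0..T}" for s
  proof -
    define d where "d = u s - v s"
    have b: "norm (u s) \<le> R" "norm (v s) \<le> R" using bd[OF s] by auto
    have i1: "d \<bullet> (lorenz lam (u s) - lorenz lam (v s)) \<le> Lip lam R * (norm d)^2"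
    proof -
      have "d \<bullet> (lorenz lam (u s) - lorenz lam (v s)) \<le> norm d * norm (lorenz lam (u s) - lorenz lam (v s))"
        by (rule norm_cauchy_schwarz)
      also have "\<dots> \<le> norm d * (Lip lam R * norm d)"
        using lorenz_lip[OF lam b] by (intro mult_left_mono) (auto simp: d_def)
      finally show ?thesis by (simp add: power2_eq_square algebra_simps)
    qed
    have i2: "2 * (d \<bullet> (lorenz lam (v s) - lorenz mu (v s))) \<le> (norm d)^2 + E"
    proof -
      have "d \<bullet> (lorenz lam (v s) - lorenz mu (v s)) \<le> norm d * norm (lorenz lam (v s) - lorenz mu (v s))"
        by (rule norm_cauchy_schwarz)
      also have "\<dots> \<le> norm d * (4 * R * dist lam mu)"
        using lorenz_param[OF b(2)] by (intro mult_left_mono) auto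
      finally have "2 * (d \<bullet> (lorenz lam (v s) - lorenz mu (v s))) \<le> 2 * (norm d * (4 * R * dist lam mu))" by linarith
      also have "\<dots> \<le> (norm d)^2 + E"
        using sum_squares_bound[of "norm d" "4 * R * dist lam mu"] unfolding E_def
        by (simp add: power2_eq_square algebra_simps)
      finally show ?thesis .
    qed
    have "w' s = 2 * (d \<bullet> (lorenz lam (u s) - lorenz lam (v s))) + 2 * (d \<bullet> (lorenz lam (v s) - lorenz mu (v s)))"
      by (simp add: w'_def d_def inner_diff_right algebra_simps)
    also have "\<dots> \<le> 2 * (Lip lam R * (norm d)^2) + ((norm d)^2 + E)" using i1 i2 by linarith
    also have "\<dots> = C * w s + E" by (simp add: C_def w_def d_def algebra_simps)
    finally show ?thesis .
  qed
  define \<psi> where "\<psi> s = exp (- C * s) * w s - E * s" for s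
  define \<psi>' where "\<psi>' s = exp (- C * s) * (- C) * w s + exp (- C * s) * w' s - E" for s
  have d\<psi>: "(\<psi> has_real_derivative \<psi>' s) (at s within {0..})" if "s \<in> {0..T}" for s
    unfolding \<psi>_def[abs_def] \<psi>'_def using dw[of s] that
    by (auto intro!: derivative_eq_intros simp: algebra_simps)
  have n\<psi>: "\<psi>' s \<le> 0" if s: "s \<in> {0..T}" for s
  proof -
    have ex: "exp (- C * s) \<le> 1" "exp (- C * s) > 0" using C0 s by (auto simp: mult_nonneg_nonneg)
    have "\<psi>' s = exp (- C * s) * (w' s - C * w s) - E" by (simp add: \<psi>'_def algebra_simps)
    also have "\<dots> \<le> exp (- C * s) * E - E"
      using w'b[OF s] ex by (intro diff_right_mono mult_left_mono) auto
    also have "\<dots> \<le> 1 * E - E" using ex E0 by (intro diff_right_mono mult_right_mono) auto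
    finally show ?thesis by simp
  qed
  have "\<psi> t \<le> \<psi> 0" by (rule decr_on[where T=T and \<phi>'=\<psi>']) (use d\<psi> n\<psi> t in auto)
  then have "exp (- C * t) * w t \<le> w 0 + E * t" by (simp add: \<psi>_def)
  then have "exp (C * t) * (exp (- C * t) * w t) \<le> exp (C * t) * (w 0 + E * t)"
    by (intro mult_left_mono) auto
  then have "w t \<le> exp (C * t) * (w 0 + E * t)" by (simp add: exp_minus field_simps)
  then show ?thesis by (simp add: w_def C_def E_def mult.commute)
qed

lemma uniqueness:
  assumes lam: "lam \<in> pos_params" and u: "lorenz_solution lam u" and v: "lorenz_solution lam v"
    and e: "u 0 = v 0" and t: "t \<ge> 0"
  shows "u t = v t"
proof -
  define R where "R = Rad lam (norm (u 0))"
  have bd: "norm (u s) \<le> R \<and> norm (v s) \<le> R" if "s \<in> {0..t}" for s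
    using sol_bound[OF lam u, of "norm (u 0)" s] sol_bound[OF lam v, of "norm (u 0)" s] that e
    by (auto simp: R_def)
  have R0: "R \<ge> 0" using bd[of 0] t by (auto intro: order_trans[OF norm_ge_zero])
  have "(norm (u t - v t))^2 \<le> exp ((2 * Lip lam R + 1) * t) * ((norm (u 0 - v 0))^2 + (4 * R * dist lam lam)^2 * t)"
    by (rule compare[OF lam u v bd _ R0]) (use t in auto)
  then show ?thesis using e by simp
qed

definition Sol :: "R3 \<Rightarrow> R3 \<Rightarrow> real \<Rightarrow> R3" where
  "Sol lam x = (SOME u. lorenz_solution lam u \<and> u 0 = x)"

lemma Sol: assumes "lam \<in> pos_params" shows "lorenz_solution lam (Sol lam x)" "Sol lam x 0 = x"
  using someI_ex[OF lorenz_exists[OF assms, of x]] by (auto simp: Sol_def)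

lemma S_eq:
  assumes lam: "lam \<in> pos_params" and u: "lorenz_solution lam u" and t: "t \<ge> 0"
  shows "lorenz_semigroup lam t (u 0) = u t"
  unfolding lorenz_semigroup_def
proof (rule the_equality)
  show "\<exists>v. lorenz_solution lam v \<and> v 0 = u 0 \<and> v t = u t" using u by blast
  fix y assume "\<exists>v. lorenz_solution lam v \<and> v 0 = u 0 \<and> v t = y"
  then obtain v where "lorenz_solution lam v" "v 0 = u 0" "v t = y" by blast
  then show "y = u t" using uniqueness[OF lam u, of v t] t by simp
qed

lemma S_Sol: "lam \<in> pos_params \<Longrightarrow> t \<ge> 0 \<Longrightarrow> lorenz_semigroup lam t x = Sol lam x t"
  using S_eq[OF _ Sol(1)] Sol(2) by metis

lemma shift_sol:
  assumes u: "lorenz_solution lam u" and s: "s \<ge> 0"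
  shows "lorenz_solution lam (\<lambda>\<tau>. u (\<tau> + s))"
  unfolding lorenz_solution_def
proof (intro allI impI)
  fix \<tau> :: real assume \<tau>: "\<tau> \<ge> 0"
  have d1: "((\<lambda>\<tau>. \<tau> + s) has_vector_derivative 1) (at \<tau> within {0..})"
    by (auto intro!: derivative_eq_intros simp: has_real_derivative_iff_has_vector_derivative[symmetric])
  have "(u has_vector_derivative lorenz lam (u (\<tau> + s))) (at (\<tau> + s) within {0..})"
    using u \<tau> s unfolding lorenz_solution_def by auto
  then have d2: "(u has_vector_derivative lorenz lam (u (\<tau> + s))) (at (\<tau> + s) within (\<lambda>\<tau>. \<tau> + s) ` {0..})"
    by (rule has_vector_derivative_within_subset) (use s in auto)
  show "((\<lambda>\<tau>. u (\<tau> + s)) has_vector_derivative lorenz lam (u (\<tau> + s))) (at \<tau> within {0..})"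
    using vector_diff_chain_within[OF d1 d2] by (simp add: o_def)
qed

lemma semigroup:
  assumes lam: "lam \<in> pos_params" and s: "s \<ge> 0" and t: "t \<ge> 0"
  shows "lorenz_semigroup lam t (lorenz_semigroup lam s x) = lorenz_semigroup lam (t + s) x"
proof -
  define u where "u = Sol lam x"
  have u: "lorenz_solution lam u" "u 0 = x" using Sol[OF lam] by (auto simp: u_def)
  have v: "lorenz_solution lam (\<lambda>\<tau>. u (\<tau> + s))" by (rule shift_sol[OF u(1) s])
  have "lorenz_semigroup lam s x = u s" using S_eq[OF lam u(1) s] u(2) by simp
  then have "lorenz_semigroup lam t (lorenz_semigroup lam s x) = u (t + s)"
    using S_eq[OF lam v t] by simp
  also have "\<dots> = lorenz_semigroup lam (t + s) x" using S_eq[OF lam u(1), of "t + s"] u(2) s t by simp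
  finally show ?thesis .
qed



abbreviation S :: "R3 \<Rightarrow> real \<Rightarrow> R3 \<Rightarrow> R3" where "S \<equiv> lorenz_semigroup"

lemma S_lip:
  assumes lam: "lam \<in> pos_params" and x: "norm x \<le> R0" and y: "norm y \<le> R0" and t: "t \<ge> 0"
  shows "dist (S lam t x) (S lam t y) \<le> exp ((2 * Lip lam (Rad lam R0) + 1) * t) * dist x y"
proof -
  define u where "u = Sol lam x"
  define v where "v = Sol lam y"
  have u: "lorenz_solution lam u" "u 0 = x" and v: "lorenz_solution lam v" "v 0 = y"
    using Sol[OF lam] by (auto simp: u_def v_def)
  define R where "R = Rad lam R0"
  define C where "C = 2 * Lip lam R + 1"
  have bd: "norm (u s) \<le> R \<and> norm (v s) \<le> R" if "s \<in> {0..t}" for s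
    using sol_bound[OF lam u(1), of R0 s] sol_bound[OF lam v(1), of R0 s] that u(2) v(2) x y
    by (auto simp: R_def)
  have R0: "R \<ge> 0" using bd[of 0] t by (auto intro: order_trans[OF norm_ge_zero])
  have C: "C \<ge> 1" using Lip_nonneg[OF lam R0] by (simp add: C_def)
  have "(norm (u t - v t))^2 \<le> exp (C * t) * ((norm (u 0 - v 0))^2 + (4 * R * dist lam lam)^2 * t)"
    unfolding C_def by (rule compare[OF lam u(1) v(1) bd _ R0]) (use t in auto)
  then have "(norm (u t - v t))^2 \<le> exp (C * t) * (norm (x - y))^2" using u v by simp
  also have "\<dots> \<le> (exp (C * t) * norm (x - y))^2"
  proof -
    have "exp (C * t) \<ge> 1" using C t by simp
    then have "exp (C * t) \<le> (exp (C * t))^2" by (simp add: power2_eq_square)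
    then show ?thesis by (simp add: power_mult_distrib mult_right_mono)
  qed
  finally have "norm (u t - v t) \<le> exp (C * t) * norm (x - y)"
    using power2_le_imp_le by force
  then show ?thesis using S_eq[OF lam u(1) t] S_eq[OF lam v(1) t] u(2) v(2)
    by (simp add: dist_norm C_def R_def)
qed

lemma S_cont:
  assumes lam: "lam \<in> pos_params" and t: "t \<ge> 0"
  shows "isCont (S lam t) y"
proof -
  define R0 where "R0 = norm y + 1"
  define K where "K = exp ((2 * Lip lam (Rad lam R0) + 1) * t)"
  have "K-lipschitz_on (cball 0 R0) (S lam t)"
    by (rule lipschitz_onI) (use S_lip[OF lam _ _ t, of _ R0] in \<open>auto simp: K_def\<close>)
  then have "continuous_on (cball 0 R0) (S lam t)" by (rule lipschitz_on_continuous_on)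
  moreover have "y \<in> interior (cball 0 R0)" by (simp add: R0_def)
  ultimately show ?thesis by (rule continuous_on_interior)
qed

definition rho1 :: "R3 \<Rightarrow> real" where "rho1 lam = sqrt (Bco lam / aco lam + 1)"
definition K0 :: "R3 \<Rightarrow> R3 set" where "K0 lam = cball (cen lam) (rho1 lam)"

lemma K0_compact: "compact (K0 lam)" by (simp add: K0_def)

lemma absorb:
  assumes lam: "lam \<in> pos_params"
  shows "\<exists>T\<ge>0. \<forall>t\<ge>T. \<forall>x. norm x \<le> R0 \<longrightarrow> S lam t x \<in> K0 lam"
proof -
  define a where "a = aco lam"
  define B where "B = Bco lam"
  define c where "c = cen lam"
  define P where "P = (max R0 0 + norm c)^2"
  have a: "a > 0" using aco_pos[OF lam] by (simp add: a_def)
  have B: "B \<ge> 0" using Bco_nonneg[OF lam] by (simp add: B_def)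
  have P: "P \<ge> 0" by (simp add: P_def)
  define T where "T = ln (P + 1) / a"
  have T: "T \<ge> 0" using a P by (simp add: T_def)
  have "\<forall>t\<ge>T. \<forall>x. norm x \<le> R0 \<longrightarrow> S lam t x \<in> K0 lam"
  proof (intro allI impI)
    fix t :: real and x :: R3 assume tT: "t \<ge> T" and x: "norm x \<le> R0"
    have t: "t \<ge> 0" using T tT by simp
    define u where "u = Sol lam x"
    have u: "lorenz_solution lam u" "u 0 = x" using Sol[OF lam] by (auto simp: u_def)
    have "norm (x - c) \<le> max R0 0 + norm c" using norm_triangle_ineq4[of x c] x by simp
    then have \<phi>0: "(norm (x - c))^2 \<le> P" unfolding P_def by (intro power_mono) auto
    have ex: "exp (- a * t) \<le> exp (- a * T)" using tT a by simp
    have "exp (- a * T) = 1 / (P + 1)" using a P by (simp add: T_def exp_minus exp_ln inverse_eq_divide)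
    then have "exp (- a * t) * P \<le> 1 / (P + 1) * P" using ex P by (intro mult_right_mono) auto
    also have "\<dots> \<le> 1" using P by (simp add: field_simps)
    finally have e1: "exp (- a * t) * P \<le> 1" .
    have "(norm (u t - c))^2 \<le> exp (- a * t) * ((norm (x - c))^2 - B / a) + B / a"
      using lyap[OF lam u(1) t] u(2) by (simp add: a_def B_def c_def)
    also have "\<dots> \<le> exp (- a * t) * P + B / a"
    proof -
      have "B / a \<ge> 0" using a B by simp
      then show ?thesis using \<phi>0 by (intro add_right_mono mult_left_mono) auto
    qed
    also have "\<dots> \<le> B / a + 1" using e1 by simp
    finally have "(norm (u t - c))^2 \<le> B / a + 1" .
    then have "sqrt ((norm (u t - c))^2) \<le> rho1 lam"
      unfolding rho1_def a_def B_def using real_sqrt_le_mono by blast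
    then have "dist c (u t) \<le> rho1 lam" by (simp add: dist_norm norm_minus_commute)
    then show "S lam t x \<in> K0 lam" using S_eq[OF lam u(1) t] u(2) by (simp add: K0_def c_def)
  qed
  then show ?thesis using T by blast
qed


definition RK :: "R3 \<Rightarrow> real" where "RK lam = norm (cen lam) + rho1 lam"

lemma K0_norm: "x \<in> K0 lam \<Longrightarrow> norm x \<le> RK lam"
proof -
  assume "x \<in> K0 lam"
  then have "dist (cen lam) x \<le> rho1 lam" by (simp add: K0_def)
  moreover have "norm x \<le> norm (cen lam) + dist (cen lam) x"
  proof -
    have "norm x \<le> norm (cen lam) + norm (x - cen lam)"
      by (metis add_diff_cancel_left' diff_add_cancel norm_triangle_ineq)
    then show ?thesis by (simp add: dist_norm norm_minus_commute)
  qed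
  ultimately show ?thesis by (simp add: RK_def)
qed

lemma cen_K0: "lam \<in> pos_params \<Longrightarrow> cen lam \<in> K0 lam"
  using Bco_nonneg[of lam] aco_pos[of lam] by (simp add: K0_def rho1_def)

lemma seqK:
  fixes f :: "nat \<Rightarrow> R3"
  assumes "\<And>n. f n \<in> K0 lam"
  shows "\<exists>l r. l \<in> K0 lam \<and> strict_mono r \<and> (f \<circ> r) \<longlonglongrightarrow> l"
proof -
  have "seq_compact (K0 lam)" by (rule compact_imp_seq_compact[OF K0_compact])
  moreover have "\<forall>n. f n \<in> K0 lam" using assms by blast
  ultimately obtain l r where "l \<in> K0 lam" "strict_mono (r :: nat \<Rightarrow> nat)" "(f \<circ> r) \<longlonglongrightarrow> l"
    by (rule seq_compactE)
  then show ?thesis by blast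
qed

definition Att :: "R3 \<Rightarrow> R3 set" where
  "Att lam = {y. \<forall>e>0. \<forall>T. \<exists>t\<ge>T. \<exists>x\<in>K0 lam. dist (S lam t x) y < e}"

lemma Att_mem:
  assumes t: "\<And>n. t n \<ge> real n" and x: "\<And>n. x n \<in> K0 lam"
    and l: "(\<lambda>n. S lam (t n) (x n)) \<longlonglongrightarrow> z"
  shows "z \<in> Att lam"
  unfolding Att_def
proof (intro CollectI allI impI)
  fix e :: real and T :: real assume e: "e > 0"
  obtain N where N: "\<And>n. n \<ge> N \<Longrightarrow> dist (S lam (t n) (x n)) z < e"
    using l e unfolding lim_sequentially by blast
  define n where "n = max N (nat \<lceil>T\<rceil>)"
  have "t n \<ge> T"
  proof -
    have "real n \<ge> real (nat \<lceil>T\<rceil>)" by (simp add: n_def)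
    moreover have "real (nat \<lceil>T\<rceil>) \<ge> T" by linarith
    ultimately show ?thesis using t[of n] by linarith
  qed
  then show "\<exists>t'\<ge>T. \<exists>x'\<in>K0 lam. dist (S lam t' x') z < e"
    using N[of n] x[of n] by (auto simp: n_def)
qed

lemma Att_extract:
  assumes x: "\<And>n. x n \<in> K0 lam" and t: "\<And>n. t n \<ge> real n"
    and k: "\<And>n. S lam (t n) (x n) \<in> K0 lam"
  shows "\<exists>r z. strict_mono r \<and> (\<lambda>n. S lam (t (r n)) (x (r n))) \<longlonglongrightarrow> z \<and> z \<in> Att lam"
proof -
  obtain z r where z: "strict_mono r" "((\<lambda>n. S lam (t n) (x n)) \<circ> r) \<longlonglongrightarrow> z"
    using seqK[of "\<lambda>n. S lam (t n) (x n)", OF k] by blast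
  have "z \<in> Att lam"
  proof (rule Att_mem[where t="t \<circ> r" and x="x \<circ> r"])
    show "real n \<le> (t \<circ> r) n" for n
    proof -
      have "real n \<le> real (r n)" using seq_suble[OF z(1), of n] by simp
      then show ?thesis using t[of "r n"] by simp
    qed
    show "\<And>n. (x \<circ> r) n \<in> K0 lam" using x by simp
    show "(\<lambda>n. S lam ((t \<circ> r) n) ((x \<circ> r) n)) \<longlonglongrightarrow> z" using z(2) by (simp add: o_def)
  qed
  then show ?thesis using z(1) z(2) unfolding o_def by blast
qed

lemma Att_closed: "closed (Att lam)"
  unfolding closed_limpt
proof (intro allI impI)
  fix y assume "y islimpt Att lam"
  then have ap: "\<And>e. e > 0 \<Longrightarrow> \<exists>y'\<in>Att lam. dist y' y < e" using islimpt_approachable by blast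
  show "y \<in> Att lam" unfolding Att_def
  proof (intro CollectI allI impI)
    fix e :: real and T :: real assume e: "e > 0"
    obtain y' where y': "y' \<in> Att lam" "dist y' y < e/2" using ap[of "e/2"] e by auto
    have "\<exists>t\<ge>T. \<exists>x\<in>K0 lam. dist (S lam t x) y' < e/2" using y'(1) e unfolding Att_def mem_Collect_eq by (meson half_gt_zero)
    then obtain t x where tx: "t \<ge> T" "x \<in> K0 lam" "dist (S lam t x) y' < e/2" by blast
    have "dist (S lam t x) y < e" using tx(3) y'(2) dist_triangle[of "S lam t x" y y'] by linarith
    then show "\<exists>t\<ge>T. \<exists>x\<in>K0 lam. dist (S lam t x) y < e" using tx by blast
  qed
qed

lemma absorbK:
  assumes lam: "lam \<in> pos_params"
  obtains TK where "TK \<ge> 0" "\<And>t x. t \<ge> TK \<Longrightarrow> x \<in> K0 lam \<Longrightarrow> S lam t x \<in> K0 lam"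
  using absorb[OF lam, of "RK lam"] K0_norm by blast

lemma Att_sub: assumes lam: "lam \<in> pos_params" shows "Att lam \<subseteq> K0 lam"
proof
  fix y assume y: "y \<in> Att lam"
  obtain TK where TK: "TK \<ge> 0" "\<And>t x. t \<ge> TK \<Longrightarrow> x \<in> K0 lam \<Longrightarrow> S lam t x \<in> K0 lam"
    using absorbK[OF lam] by blast
  have "\<forall>e>0. \<exists>p\<in>K0 lam. dist p y < e"
  proof (intro allI impI)
    fix e :: real assume "e > 0"
    then obtain t x where "t \<ge> TK" "x \<in> K0 lam" "dist (S lam t x) y < e" using y unfolding Att_def by blast
    then show "\<exists>p\<in>K0 lam. dist p y < e" using TK by blast
  qed
  then show "y \<in> K0 lam" using closed_approachable[of "K0 lam" y] by (simp add: K0_def)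
qed

lemma Att_compact: assumes lam: "lam \<in> pos_params" shows "compact (Att lam)"
proof -
  have "compact (K0 lam \<inter> Att lam)" by (rule compact_Int_closed[OF K0_compact Att_closed])
  moreover have "K0 lam \<inter> Att lam = Att lam" using Att_sub[OF lam] by blast
  ultimately show ?thesis by simp
qed

lemma Att_nonempty: assumes lam: "lam \<in> pos_params" shows "Att lam \<noteq> {}"
proof -
  obtain TK where TK: "TK \<ge> 0" "\<And>t x. t \<ge> TK \<Longrightarrow> x \<in> K0 lam \<Longrightarrow> S lam t x \<in> K0 lam"
    using absorbK[OF lam] by blast
  have "\<exists>r z. strict_mono r \<and> (\<lambda>n. S lam ((\<lambda>n. real n + TK) (r n)) ((\<lambda>n. cen lam) (r n))) \<longlonglongrightarrow> z \<and> z \<in> Att lam"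
  proof (rule Att_extract)
    show "\<And>n. cen lam \<in> K0 lam" using cen_K0[OF lam] .
    show "\<And>n. real n \<le> real n + TK" using TK(1) by simp
    show "\<And>n. S lam (real n + TK) (cen lam) \<in> K0 lam" using TK(2) cen_K0[OF lam] TK(1) by simp
  qed
  then obtain z where "z \<in> Att lam" by blast
  then show ?thesis by blast
qed

lemma dist_inv_lim:
  assumes "\<And>n. dist (X n) y < 1 / (real n + 1)"
  shows "X \<longlonglongrightarrow> y"
  unfolding lim_sequentially
proof (intro allI impI)
  fix e :: real assume e: "e > 0"
  obtain N where N: "inverse (real (Suc N)) < e" using reals_Archimedean[OF e] by blast
  show "\<exists>N. \<forall>n\<ge>N. dist (X n) y < e"
  proof (intro exI[of _ N] allI impI)
    fix n assume n: "n \<ge> N"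
    have "1 / (real n + 1) \<le> 1 / (real N + 1)" using n by (intro divide_left_mono) auto
    also have "\<dots> < e" using N by (simp add: inverse_eq_divide add.commute)
    finally show "dist (X n) y < e" using assms[of n] by linarith
  qed
qed


lemma Att_attracts:
  assumes lam: "lam \<in> pos_params" and D: "bounded D" and e: "e > 0"
  shows "\<exists>T. \<forall>t\<ge>T. \<forall>x\<in>D. infdist (S lam t x) (Att lam) < e"
proof (rule ccontr)
  assume na: "\<not> ?thesis"
  obtain R0 where R0: "\<And>x. x \<in> D \<Longrightarrow> norm x \<le> R0" using D unfolding bounded_iff by blast
  obtain TD where TD: "TD \<ge> 0" "\<And>t x. t \<ge> TD \<Longrightarrow> norm x \<le> R0 \<Longrightarrow> S lam t x \<in> K0 lam"
    using absorb[OF lam, of R0] by blast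
  obtain TK where TK: "TK \<ge> 0" "\<And>t x. t \<ge> TK \<Longrightarrow> x \<in> K0 lam \<Longrightarrow> S lam t x \<in> K0 lam"
    using absorbK[OF lam] by blast
  have "\<forall>n. \<exists>t x. t \<ge> real n + TD + TK \<and> x \<in> D \<and> infdist (S lam t x) (Att lam) \<ge> e"
    using na by (meson not_le)
  then obtain tt xx where tx: "\<And>n. tt n \<ge> real n + TD + TK" "\<And>n. xx n \<in> D"
      "\<And>n. infdist (S lam (tt n) (xx n)) (Att lam) \<ge> e"
    by metis
  define x' where "x' n = S lam TD (xx n)" for n
  define t' where "t' n = tt n - TD" for n
  have eq: "S lam (t' n) (x' n) = S lam (tt n) (xx n)" for n
    using semigroup[OF lam TD(1), of "t' n" "xx n"] tx(1)[of n] TK(1)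
    by (simp add: x'_def t'_def)
  have x'K: "x' n \<in> K0 lam" for n using TD(2)[OF _ R0[OF tx(2)]] by (simp add: x'_def)
  have t'n: "t' n \<ge> real n" for n using tx(1)[of n] TK(1) by (simp add: t'_def)
  have SK: "S lam (t' n) (x' n) \<in> K0 lam" for n
    using TK(2)[OF _ x'K] tx(1)[of n] by (simp add: t'_def)
  obtain r z where rz: "strict_mono r" "(\<lambda>n. S lam (t' (r n)) (x' (r n))) \<longlonglongrightarrow> z" "z \<in> Att lam"
    using Att_extract[OF x'K t'n SK] by blast
  obtain N where N: "dist (S lam (t' (r N)) (x' (r N))) z < e"
    using rz(2) e unfolding lim_sequentially by blast
  have "infdist (S lam (tt (r N)) (xx (r N))) (Att lam) \<le> dist (S lam (tt (r N)) (xx (r N))) z"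
    by (rule infdist_le[OF rz(3)])
  then show False using N eq[of "r N"] tx(3)[of "r N"] by simp
qed

lemma Att_inv:
  assumes lam: "lam \<in> pos_params" and t: "t \<ge> 0"
  shows "S lam t ` Att lam = Att lam"
proof
  show "S lam t ` Att lam \<subseteq> Att lam"
  proof
    fix w assume "w \<in> S lam t ` Att lam"
    then obtain y where y: "y \<in> Att lam" "w = S lam t y" by blast
    show "w \<in> Att lam" unfolding Att_def y(2)
    proof (intro CollectI allI impI)
      fix e :: real and T :: real assume e: "e > 0"
      obtain d where d: "d > 0" "\<And>z. dist z y < d \<Longrightarrow> dist (S lam t z) (S lam t y) < e"
        using S_cont[OF lam t, of y] e unfolding continuous_at_eps_delta by blast
      obtain t' x where tx: "t' \<ge> max T 0" "x \<in> K0 lam" "dist (S lam t' x) y < d"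
        using y(1) d(1) unfolding Att_def by blast
      have "S lam (t + t') x = S lam t (S lam t' x)" using semigroup[OF lam _ t] tx(1) by simp
      then have "dist (S lam (t + t') x) (S lam t y) < e" using d(2)[OF tx(3)] by simp
      moreover have "t + t' \<ge> T" using tx(1) t by simp
      ultimately show "\<exists>t'\<ge>T. \<exists>x\<in>K0 lam. dist (S lam t' x) (S lam t y) < e" using tx(2) by blast
    qed
  qed
next
  show "Att lam \<subseteq> S lam t ` Att lam"
  proof
    fix y assume y: "y \<in> Att lam"
    obtain TK where TK: "TK \<ge> 0" "\<And>t x. t \<ge> TK \<Longrightarrow> x \<in> K0 lam \<Longrightarrow> S lam t x \<in> K0 lam"
      using absorbK[OF lam] by blast
    have "\<forall>n. \<exists>s x. s \<ge> real n + t + TK \<and> x \<in> K0 lam \<and> dist (S lam s x) y < 1 / (real n + 1)"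
    proof
      fix n
      have p: "1 / (real n + 1) > 0" by simp
      have "\<exists>s\<ge>real n + t + TK. \<exists>x\<in>K0 lam. dist (S lam s x) y < 1 / (real n + 1)"
        using y p unfolding Att_def mem_Collect_eq by blast
      then show "\<exists>s x. s \<ge> real n + t + TK \<and> x \<in> K0 lam \<and> dist (S lam s x) y < 1 / (real n + 1)"
        by blast
    qed
    then obtain tt xx where tx: "\<And>n. tt n \<ge> real n + t + TK" "\<And>n. xx n \<in> K0 lam"
      "\<And>n. dist (S lam (tt n) (xx n)) y < 1 / (real n + 1)"
      by metis
    define t' where "t' n = tt n - t" for n
    have t'n: "t' n \<ge> real n" for n using tx(1)[of n] TK(1) by (simp add: t'_def)
    have SK: "S lam (t' n) (xx n) \<in> K0 lam" for n
      using TK(2)[OF _ tx(2)] tx(1)[of n] by (simp add: t'_def)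
    obtain r z where rz: "strict_mono r" "(\<lambda>n. S lam (t' (r n)) (xx (r n))) \<longlonglongrightarrow> z" "z \<in> Att lam"
      using Att_extract[OF tx(2) t'n SK] by blast
    have eq: "S lam t (S lam (t' n) (xx n)) = S lam (tt n) (xx n)" for n
      using semigroup[OF lam _ t, of "t' n" "xx n"] t'n[of n] by (simp add: t'_def)
    have l1: "(\<lambda>n. S lam t (S lam (t' (r n)) (xx (r n)))) \<longlonglongrightarrow> S lam t z"
      by (rule isCont_tendsto_compose[OF S_cont[OF lam t] rz(2)])
    have l2: "(\<lambda>n. S lam (tt n) (xx n)) \<longlonglongrightarrow> y" by (rule dist_inv_lim[OF tx(3)])
    have "(\<lambda>n. S lam (tt (r n)) (xx (r n))) \<longlonglongrightarrow> y"
      using LIMSEQ_subseq_LIMSEQ[OF l2 rz(1)] by (simp add: o_def)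
    then have "S lam t z = y" using l1 unfolding eq by (rule LIMSEQ_unique[rotated])
    then show "y \<in> S lam t ` Att lam" using rz(3) by blast
  qed
qed

lemma Att_global: "lam \<in> pos_params \<Longrightarrow> is_global_attractor (S lam) (Att lam)"
  unfolding is_global_attractor_def
  using Att_nonempty Att_compact Att_inv Att_attracts by simp

lemma attractor_unique:
  fixes SS :: "real \<Rightarrow> R3 \<Rightarrow> R3"
  assumes A: "is_global_attractor SS A" and A': "is_global_attractor SS A'"
  shows "A \<subseteq> A'"
proof
  fix a assume a: "a \<in> A"
  have A'ne: "A' \<noteq> {}" "closed A'" using A' compact_imp_closed by (auto simp: is_global_attractor_def)
  have bA: "bounded A" using A compact_imp_bounded by (auto simp: is_global_attractor_def)
  have att: "\<forall>B. bounded B \<longrightarrow> (\<forall>e>0. \<exists>T. \<forall>t\<ge>T. \<forall>x\<in>B. infdist (SS t x) A' < e)"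
    using A' by (simp add: is_global_attractor_def)
  have inv: "\<forall>t\<ge>0. SS t ` A = A" using A by (simp add: is_global_attractor_def)
  have "infdist a A' < e" if e: "e > 0" for e
  proof -
    obtain T where T: "\<forall>t\<ge>T. \<forall>x\<in>A. infdist (SS t x) A' < e"
      using att bA e by blast
    have "a \<in> SS (max T 0) ` A" using inv a by simp
    then obtain x where "x \<in> A" "a = SS (max T 0) x" by blast
    then show ?thesis using T by simp
  qed
  then have "infdist a A' = 0" using infdist_nonneg[of a A']
    by (metis less_eq_real_def not_less)
  then have "a \<in> closure A'" using in_closure_iff_infdist_zero[OF A'ne(1)] by blast
  then show "a \<in> A'" using A'ne(2) by (simp add: closure_closed)
qed

lemma lorenz_attractor_eq: "lam \<in> pos_params \<Longrightarrow> lorenz_attractor lam = Att lam"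
  unfolding lorenz_attractor_def
proof -
  assume lam: "lam \<in> pos_params"
  show "(THE A. is_global_attractor (S lam) A) = Att lam"
  proof (rule the_equality)
    show "is_global_attractor (S lam) (Att lam)" by (rule Att_global[OF lam])
    fix A assume "is_global_attractor (S lam) A"
    then show "A = Att lam" using attractor_unique Att_global[OF lam] by (metis subset_antisym)
  qed
qed



lemma param_bounds:
  assumes lam: "lam \<in> pos_params"
  shows "\<exists>d>0. \<exists>Cc Q. Cc \<ge> 0 \<and> Q \<ge> 0 \<and> (\<forall>mu\<in>pos_params. dist mu lam < d \<longrightarrow>
            norm (cen mu) \<le> Cc \<and> Bco mu / aco mu \<le> Q)"
proof -
  obtain s b r where l: "lam = (s,b,r)" by (cases lam)
  have pos: "s > 0" "b > 0" "r > 0" using lam l by (auto simp: pos_params_def)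
  define d where "d = min (min s b) r / 2"
  define al where "al = min (min s 2) (b/2)"
  define Cc where "Cc = 2 * s + 2 * r"
  define Q where "Q = 2 * b * Cc^2 / al"
  have d: "d > 0" using pos by (simp add: d_def)
  have al: "al > 0" using pos by (simp add: al_def)
  have Cc: "Cc \<ge> 0" using pos by (simp add: Cc_def)
  have Q: "Q \<ge> 0" using pos al by (simp add: Q_def)
  have "\<forall>mu\<in>pos_params. dist mu lam < d \<longrightarrow> norm (cen mu) \<le> Cc \<and> Bco mu / aco mu \<le> Q"
  proof (intro ballI impI)
    fix mu assume mu: "mu \<in> pos_params" "dist mu lam < d"
    obtain s' b' r' where m: "mu = (s',b',r')" by (cases mu)
    have pos': "s' > 0" "b' > 0" "r' > 0" using mu m by (auto simp: pos_params_def)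
    have cd: "\<bar>s' - s\<bar> < d" "\<bar>b' - b\<bar> < d" "\<bar>r' - r\<bar> < d"
      using comp_le_norm[of "mu - lam"] mu(2) by (auto simp: dist_norm l m)
    have dd: "d \<le> s/2" "d \<le> b/2" "d \<le> r/2" using pos by (auto simp: d_def)
    have b1: "s' \<le> 2 * s" "r' \<le> 2 * r" "b' \<le> 2 * b" "s' \<ge> s/2" "b' \<ge> b/2"
      using cd dd by linarith+
    have nc: "norm (cen mu) = s' + r'" using pos' by (simp add: cen_def m norm3)
    have c1: "norm (cen mu) \<le> Cc" using nc b1 by (simp add: Cc_def)
    have ac: "aco mu \<ge> al" using b1 pos by (auto simp: aco_def m al_def min_def)
    have "Bco mu = b' * (s' + r')^2" by (simp add: Bco_def m)
    also have "\<dots> \<le> (2 * b) * Cc^2"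
      using b1 pos' c1 nc by (intro mult_mono power_mono) auto
    finally have Bb: "Bco mu \<le> 2 * b * Cc^2" .
    have "Bco mu / aco mu \<le> Bco mu / al"
      using ac al Bco_nonneg[OF mu(1)] by (intro divide_left_mono) auto
    also have "\<dots> \<le> 2 * b * Cc^2 / al" using Bb al by (intro divide_right_mono) auto
    finally show "norm (cen mu) \<le> Cc \<and> Bco mu / aco mu \<le> Q" using c1 by (simp add: Q_def)
  qed
  then show ?thesis using d Cc Q by blast
qed

lemma usc:
  assumes lam: "lam \<in> pos_params" and e: "e > 0"
  shows "\<exists>d>0. \<forall>mu\<in>pos_params. dist mu lam < d \<longrightarrow> (\<forall>a\<in>Att mu. infdist a (Att lam) < e)"
proof -
  obtain d1 Cc Q where d1: "d1 > 0" "Cc \<ge> 0" "Q \<ge> 0"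
    and pb: "\<And>mu. mu \<in> pos_params \<Longrightarrow> dist mu lam < d1 \<Longrightarrow> norm (cen mu) \<le> Cc \<and> Bco mu / aco mu \<le> Q"
    using param_bounds[OF lam] by blast
  define R1 where "R1 = Cc + sqrt (Q + 1)"
  define R2 where "R2 = Cc + sqrt ((R1 + Cc)^2 + Q)"
  have R1: "R1 \<ge> 0" using d1 by (simp add: R1_def)
  have R2: "R2 \<ge> 0" using d1 by (simp add: R2_def)
  have RK1: "RK mu \<le> R1" if "mu \<in> pos_params" "dist mu lam < d1" for mu
    using pb[OF that] unfolding RK_def rho1_def R1_def
    by (intro add_mono real_sqrt_le_mono) auto
  have Rad2: "Rad mu R1 \<le> R2" if "mu \<in> pos_params" "dist mu lam < d1" for mu
  proof -
    have "(R1 + norm (cen mu))^2 \<le> (R1 + Cc)^2" using pb[OF that] R1 by (intro power_mono) auto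
    then show ?thesis using pb[OF that] unfolding Rad_def R2_def
      by (intro add_mono real_sqrt_le_mono) auto
  qed
  obtain T where T0: "\<forall>t\<ge>T. \<forall>x\<in>cball 0 R1. infdist (S lam t x) (Att lam) < e/2"
    using Att_attracts[OF lam bounded_cball half_gt_zero[OF e]] by blast
  have T: "infdist (S lam t x) (Att lam) < e/2" if "t \<ge> T" "x \<in> cball 0 R1" for t x
    using T0 that by blast
  define T' where "T' = max T 0"
  define C where "C = 2 * Lip lam R2 + 1"
  define M where "M = exp (C * T') * (4 * R2)^2 * T' + 1"
  have M: "M > 0" unfolding M_def using T'_def by (simp add: add_nonneg_pos)
  define d where "d = min d1 (e / (2 * sqrt M))"
  have d: "d > 0" using d1 e M by (simp add: d_def)
  have "\<forall>mu\<in>pos_params. dist mu lam < d \<longrightarrow> (\<forall>a\<in>Att mu. infdist a (Att lam) < e)"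
  proof (intro ballI impI)
    fix mu a assume mu: "mu \<in> pos_params" "dist mu lam < d" and a: "a \<in> Att mu"
    have mu1: "dist mu lam < d1" using mu(2) by (simp add: d_def)
    have T'0: "T' \<ge> 0" by (simp add: T'_def)
    obtain x where x: "x \<in> Att mu" "a = S mu T' x" using a Att_inv[OF mu(1) T'0] by blast
    have nx: "norm x \<le> R1" using K0_norm[of x mu] Att_sub[OF mu(1)] x(1) RK1[OF mu(1) mu1] by auto
    define u where "u = Sol lam x"
    define v where "v = Sol mu x"
    have u: "lorenz_solution lam u" "u 0 = x" and v: "lorenz_solution mu v" "v 0 = x"
      using Sol[OF lam] Sol[OF mu(1)] by (auto simp: u_def v_def)
    have bd: "norm (u s) \<le> R2 \<and> norm (v s) \<le> R2" if "s \<in> {0..T'}" for s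
    proof
      show "norm (u s) \<le> R2"
        using sol_bound[OF lam u(1), of R1 s] Rad2[OF lam] d1 u(2) nx that by auto
      show "norm (v s) \<le> R2"
        using sol_bound[OF mu(1) v(1), of R1 s] Rad2[OF mu(1) mu1] v(2) nx that by auto
    qed
    have "(norm (u T' - v T'))^2 \<le> exp (C * T') * ((norm (u 0 - v 0))^2 + (4 * R2 * dist lam mu)^2 * T')"
      unfolding C_def by (rule compare[OF lam u(1) v(1) bd _ R2]) (use T'0 in auto)
    also have "\<dots> = (exp (C * T') * (4 * R2)^2 * T') * (dist mu lam)^2"
      using u(2) v(2) by (simp add: power_mult_distrib dist_commute algebra_simps)
    also have "\<dots> \<le> M * (dist mu lam)^2" by (intro mult_right_mono) (auto simp: M_def)
    also have "\<dots> \<le> M * (e / (2 * sqrt M))^2"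
    proof -
      have "dist mu lam \<le> e / (2 * sqrt M)" using mu(2) by (simp add: d_def)
      then show ?thesis using M by (intro mult_left_mono power_mono) auto
    qed
    also have "\<dots> = (e/2)^2" using M by (simp add: power_divide power_mult_distrib)
    finally have "(norm (u T' - v T'))^2 \<le> (e/2)^2" .
    then have nuv: "norm (u T' - v T') \<le> e/2" using e by (simp add: power2_le_iff_abs_le)
    have Su: "S lam T' x = u T'" using S_eq[OF lam u(1) T'0] u(2) by simp
    have Sv: "a = v T'" using S_eq[OF mu(1) v(1) T'0] v(2) x(2) by simp
    have "infdist (u T') (Att lam) < e/2" using T[of T' x] nx Su by (simp add: T'_def)
    then have "infdist a (Att lam) < e/2 + dist a (u T')"
      using infdist_triangle[of a "Att lam" "u T'"] by linarith
    moreover have "dist a (u T') \<le> e/2" using nuv Sv by (simp add: dist_norm norm_minus_commute)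
    ultimately show "infdist a (Att lam) < e" by linarith
  qed
  then show ?thesis using d by blast
qed



lemma infdist_lower:
  assumes "A \<noteq> {}" "\<And>a. a \<in> A \<Longrightarrow> c \<le> dist x a"
  shows "c \<le> infdist x A"
  using assms by (simp add: infdist_notempty cINF_greatest)

lemma pos_open: "open pos_params"
proof -
  have "pos_params = {p. 0 < fst p} \<inter> {p. 0 < fst (snd p)} \<inter> {p. 0 < snd (snd p)}"
    by (auto simp: pos_params_def)
  moreover have "open {p::R3. 0 < fst p}" "open {p::R3. 0 < fst (snd p)}" "open {p::R3. 0 < snd (snd p)}"
    by (auto intro!: open_Collect_less continuous_intros)
  ultimately show ?thesis by (metis open_Int)
qed

definition near :: "R3 \<Rightarrow> (R3 \<Rightarrow> bool) \<Rightarrow> bool" where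
  "near lam P = eventually P (inf (nhds lam) (principal pos_params))"

lemma near_iff: "near lam P \<longleftrightarrow> (\<exists>d>0. \<forall>mu\<in>pos_params. dist mu lam < d \<longrightarrow> P mu)"
  unfolding near_def eventually_inf_principal eventually_nhds_metric by blast

definition phi :: "R3 \<Rightarrow> R3 \<Rightarrow> real" where "phi q lam = infdist q (Att lam)"

definition G :: "R3 \<Rightarrow> real \<Rightarrow> R3 set" where
  "G q \<rho> = {lam \<in> pos_params. phi q lam > \<rho>}"

lemma G_open: "open (G q \<rho>)"
  unfolding open_dist
proof (intro ballI)
  fix lam assume lam: "lam \<in> G q \<rho>"
  then have lp: "lam \<in> pos_params" and gt: "phi q lam > \<rho>" by (auto simp: G_def)
  define e where "e = (phi q lam - \<rho>) / 2"
  have e: "e > 0" using gt by (simp add: e_def)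
  obtain d1 where d1: "d1 > 0" "\<And>mu. mu \<in> pos_params \<Longrightarrow> dist mu lam < d1 \<Longrightarrow> \<forall>a\<in>Att mu. infdist a (Att lam) < e"
    using usc[OF lp e] by blast
  obtain d2 where d2: "d2 > 0" "ball lam d2 \<subseteq> pos_params"
    using pos_open lp open_contains_ball by blast
  show "\<exists>d>0. \<forall>mu. dist mu lam < d \<longrightarrow> mu \<in> G q \<rho>"
  proof (intro exI[of _ "min d1 d2"] conjI allI impI)
    show "min d1 d2 > 0" using d1 d2 by simp
    fix mu assume "dist mu lam < min d1 d2"
    then have mu: "mu \<in> pos_params" "dist mu lam < d1" using d2 by (auto simp: dist_commute)
    have "phi q lam - e \<le> phi q mu"
      unfolding phi_def
    proof (rule infdist_lower)
      show "Att mu \<noteq> {}" by (rule Att_nonempty[OF mu(1)])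
      fix a assume a: "a \<in> Att mu"
      have "infdist q (Att lam) \<le> infdist a (Att lam) + dist q a" by (rule infdist_triangle)
      moreover have "infdist a (Att lam) < e" using d1(2)[OF mu] a by blast
      ultimately show "infdist q (Att lam) - e \<le> dist q a" by linarith
    qed
    moreover have "e < phi q lam - \<rho>" using gt by (simp add: e_def)
    ultimately have "phi q mu > \<rho>" by linarith
    then show "mu \<in> G q \<rho>" using mu(1) by (simp add: G_def)
  qed
qed

lemma frontier_nowhere:
  assumes "open U"
  shows "nowhere_dense (closure U - U)"
proof -
  have cl: "closed (closure U - U)" using assms by (simp add: closed_Diff)
  have "interior (closure U - U) = {}"
  proof -
    have "interior (closure U - U) \<inter> closure U = interior (closure U - U)"
      using interior_subset by blast
    moreover have "interior (closure U - U) \<inter> U = {}" using interior_subset by blast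
    ultimately show ?thesis using open_Int_closure_eq_empty[OF open_interior, of "closure U - U" U] by simp
  qed
  then show ?thesis unfolding nowhere_dense_def using cl by (simp add: closure_closed)
qed

definition I3 :: "(R3 \<times> real) set" where "I3 = (\<rat> \<times> \<rat> \<times> \<rat>) \<times> \<rat>"

lemma I3_countable: "countable I3" unfolding I3_def using countable_rat by auto

definition NN :: "nat \<Rightarrow> R3 set" where
  "NN n = (case from_nat_into I3 n of (q, \<rho>) \<Rightarrow> closure (G q \<rho>) - G q \<rho>)"

lemma NN_nowhere: "nowhere_dense (NN n)"
  unfolding NN_def by (cases "from_nat_into I3 n") (simp add: frontier_nowhere G_open)

definition LL :: "R3 set" where "LL = pos_params - (\<Union>n. NN n)"

lemma Q3_dense:
  fixes p :: R3
  assumes e: "e > 0"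
  shows "\<exists>q\<in>\<rat> \<times> \<rat> \<times> \<rat>. dist p q < e"
proof -
  obtain x y z where p: "p = (x,y,z)" by (cases p)
  obtain a where a: "a \<in> \<rat>" "x < a" "a < x + e/3" using Rats_dense_in_real[of x "x + e/3"] e by auto
  obtain b where b: "b \<in> \<rat>" "y < b" "b < y + e/3" using Rats_dense_in_real[of y "y + e/3"] e by auto
  obtain c where c: "c \<in> \<rat>" "z < c" "c < z + e/3" using Rats_dense_in_real[of z "z + e/3"] e by auto
  have "dist p (a,b,c) \<le> \<bar>x - a\<bar> + \<bar>y - b\<bar> + \<bar>z - c\<bar>"
    using norm3_le[of "x - a" "y - b" "z - c"] by (simp add: p dist_norm)
  also have "\<dots> < e" using a b c by simp
  finally show ?thesis using a b c by blast
qed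

lemma phi_usc_at_LL:
  assumes lam: "lam \<in> LL" and q: "q \<in> \<rat> \<times> \<rat> \<times> \<rat>" and e: "e > 0"
  shows "near lam (\<lambda>mu. phi q mu < phi q lam + e)"
proof -
  obtain \<rho> where \<rho>: "\<rho> \<in> \<rat>" "phi q lam < \<rho>" "\<rho> < phi q lam + e"
    using Rats_dense_in_real[of "phi q lam" "phi q lam + e"] e by auto
  have "(q, \<rho>) \<in> I3" using q \<rho>(1) by (simp add: I3_def)
  then obtain n where n: "from_nat_into I3 n = (q, \<rho>)" using from_nat_into_surj[OF I3_countable] by blast
  have "lam \<notin> NN n" using lam by (auto simp: LL_def)
  moreover have "lam \<notin> G q \<rho>" using \<rho>(2) by (simp add: G_def)
  ultimately have "lam \<notin> closure (G q \<rho>)" by (simp add: NN_def n)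
  then obtain d where d: "d > 0" "\<And>y. y \<in> G q \<rho> \<Longrightarrow> \<not> dist y lam < d"
    unfolding closure_approachable by auto
  have "\<forall>mu\<in>pos_params. dist mu lam < d \<longrightarrow> phi q mu < phi q lam + e"
  proof (intro ballI impI)
    fix mu assume "mu \<in> pos_params" "dist mu lam < d"
    then have "mu \<notin> G q \<rho>" using d(2) by blast
    then have "phi q mu \<le> \<rho>" using \<open>mu \<in> pos_params\<close> by (simp add: G_def)
    then show "phi q mu < phi q lam + e" using \<rho>(3) by simp
  qed
  then show ?thesis unfolding near_iff using d(1) by blast
qed



lemma LL_residual: "residual_in LL pos_params"
  unfolding residual_in_def using NN_nowhere by (auto simp: LL_def)

lemma LL_dense: "dense_in LL pos_params"
  unfolding dense_in_def
proof
  show "LL \<subseteq> pos_params" by (auto simp: LL_def)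
  define \<G> where "\<G> = range (\<lambda>n. - closure (NN n))"
  have "UNIV \<subseteq> closure (\<Inter>\<G>)"
  proof (rule Baire)
    show "closed (UNIV :: R3 set)" by simp
    show "countable \<G>" by (simp add: \<G>_def)
    fix T assume "T \<in> \<G>"
    then obtain n where T: "T = - closure (NN n)" by (auto simp: \<G>_def)
    have "open T" by (simp add: T open_Compl)
    moreover have "closure T = UNIV"
      using NN_nowhere[of n] by (simp add: T closure_complement nowhere_dense_def)
    ultimately show "openin (top_of_set UNIV) T \<and> UNIV \<subseteq> closure T" by simp
  qed
  show "pos_params \<subseteq> closure LL"
  proof
    fix x assume x: "x \<in> pos_params"
    obtain d2 where d2: "d2 > 0" "ball x d2 \<subseteq> pos_params"
      using pos_open x open_contains_ball by blast
    show "x \<in> closure LL" unfolding closure_approachable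
    proof (intro allI impI)
      fix \<epsilon> :: real assume \<epsilon>: "\<epsilon> > 0"
      have "x \<in> closure (\<Inter>\<G>)" using \<open>UNIV \<subseteq> closure (\<Inter>\<G>)\<close> by blast
      then obtain y where y: "y \<in> \<Inter>\<G>" "dist y x < min \<epsilon> d2"
        unfolding closure_approachable using \<epsilon> d2 by (meson min_less_iff_conj)
      have "y \<in> pos_params" using y(2) d2 by (auto simp: dist_commute)
      moreover have "y \<notin> NN n" for n using y(1) closure_subset[of "NN n"] by (auto simp: \<G>_def)
      ultimately have "y \<in> LL" by (simp add: LL_def)
      then show "\<exists>y\<in>LL. dist y x < \<epsilon>" using y(2) by auto
    qed
  qed
qed

lemma LL_cont:
  assumes lam: "lam \<in> LL" and e: "e > 0"
  shows "\<exists>d>0. \<forall>mu\<in>pos_params. dist mu lam < d \<longrightarrow>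
        hausdorff_dist (lorenz_attractor mu) (lorenz_attractor lam) < e"
proof -
  have lp: "lam \<in> pos_params" using lam by (simp add: LL_def)
  obtain d1 where d1: "d1 > 0" "\<forall>mu\<in>pos_params. dist mu lam < d1 \<longrightarrow> (\<forall>a\<in>Att mu. infdist a (Att lam) < e/2)"
    using usc[OF lp half_gt_zero[OF e]] by blast
  have n1: "near lam (\<lambda>mu. \<forall>a\<in>Att mu. infdist a (Att lam) < e/2)"
    unfolding near_iff using d1 by blast
  have e8: "e/8 > 0" using e by simp
  have "seq_compact (Att lam)" by (rule compact_imp_seq_compact[OF Att_compact[OF lp]])
  from seq_compact_imp_totally_bounded[OF this, rule_format, OF e8]
  obtain k where k: "finite k" "k \<subseteq> Att lam" "Att lam \<subseteq> (\<Union>y\<in>k. ball y (e/8))"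
    by blast
  have "\<forall>y\<in>k. \<exists>q. q \<in> \<rat> \<times> \<rat> \<times> \<rat> \<and> dist y q < e/8" using Q3_dense[OF e8] by blast
  from bchoice[OF this] obtain qq where qq0: "\<forall>y\<in>k. qq y \<in> \<rat> \<times> \<rat> \<times> \<rat> \<and> dist y (qq y) < e/8"
    by blast
  then have qq: "\<And>y. y \<in> k \<Longrightarrow> qq y \<in> \<rat> \<times> \<rat> \<times> \<rat>" "\<And>y. y \<in> k \<Longrightarrow> dist y (qq y) < e/8"
    by auto
  have phl: "phi (qq y) lam < e/8" if "y \<in> k" for y
  proof -
    have "phi (qq y) lam \<le> dist (qq y) y" unfolding phi_def
      by (rule infdist_le) (use k(2) that in blast)
    then show ?thesis using qq(2)[OF that] by (simp add: dist_commute)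
  qed
  have "\<forall>y\<in>k. near lam (\<lambda>mu. phi (qq y) mu < e/4)"
  proof
    fix y assume y: "y \<in> k"
    have "near lam (\<lambda>mu. phi (qq y) mu < phi (qq y) lam + e/8)"
      by (rule phi_usc_at_LL[OF lam qq(1)[OF y] e8])
    then show "near lam (\<lambda>mu. phi (qq y) mu < e/4)"
      unfolding near_def by (rule eventually_mono) (use phl[OF y] in simp)
  qed
  then have n2: "near lam (\<lambda>mu. \<forall>y\<in>k. phi (qq y) mu < e/4)"
    unfolding near_def by (rule eventually_ball_finite[OF k(1)])
  have "near lam (\<lambda>mu. (\<forall>a\<in>Att mu. infdist a (Att lam) < e/2) \<and> (\<forall>y\<in>k. phi (qq y) mu < e/4))"
    using n1 n2 unfolding near_def by (rule eventually_conj)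
  then obtain d where d: "d > 0" "\<And>mu. mu \<in> pos_params \<Longrightarrow> dist mu lam < d \<Longrightarrow>
      (\<forall>a\<in>Att mu. infdist a (Att lam) < e/2) \<and> (\<forall>y\<in>k. phi (qq y) mu < e/4)"
    unfolding near_iff by blast
  have "\<forall>mu\<in>pos_params. dist mu lam < d \<longrightarrow> hausdorff_dist (lorenz_attractor mu) (lorenz_attractor lam) < e"
  proof (intro ballI impI)
    fix mu assume mu: "mu \<in> pos_params" "dist mu lam < d"
    note P = d(2)[OF mu]
    have s1: "(SUP a\<in>Att mu. infdist a (Att lam)) \<le> e/2"
    proof (rule cSUP_least)
      show "Att mu \<noteq> {}" by (rule Att_nonempty[OF mu(1)])
      fix a assume "a \<in> Att mu"
      then have "infdist a (Att lam) < e/2" using P by blast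
      then show "infdist a (Att lam) \<le> e/2" by simp
    qed
    have s2: "(SUP c\<in>Att lam. infdist c (Att mu)) \<le> e/2"
    proof (rule cSUP_least)
      show "Att lam \<noteq> {}" by (rule Att_nonempty[OF lp])
      fix c assume c: "c \<in> Att lam"
      then obtain y where y: "y \<in> k" "dist y c < e/8" using k(3) by auto
      have "infdist c (Att mu) \<le> infdist (qq y) (Att mu) + dist c (qq y)" by (rule infdist_triangle)
      moreover have "infdist (qq y) (Att mu) < e/4" using P y(1) by (simp add: phi_def)
      moreover have "dist c (qq y) \<le> dist c y + dist y (qq y)" by (rule dist_triangle)
      moreover have "dist c y < e/8" using y(2) by (simp add: dist_commute)
      moreover have "dist y (qq y) < e/8" by (rule qq(2)[OF y(1)])
      ultimately show "infdist c (Att mu) \<le> e/2" by linarith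
    qed
    have "hausdorff_dist (Att mu) (Att lam) \<le> e/2"
      unfolding hausdorff_dist_def using s1 s2 by simp
    then show "hausdorff_dist (lorenz_attractor mu) (lorenz_attractor lam) < e"
      using e lorenz_attractor_eq[OF mu(1)] lorenz_attractor_eq[OF lp] by simp
  qed
  then show ?thesis using d(1) by blast
qed

theorem theorem6p2:
  shows "\<exists>L. residual_in L pos_params \<and> dense_in L pos_params \<and>
     (\<forall>lam\<in>L. \<forall>e>0. \<exists>d>0. \<forall>mu\<in>pos_params. dist mu lam < d \<longrightarrow>
        hausdorff_dist (lorenz_attractor mu) (lorenz_attractor lam) < e)"
  using LL_residual LL_dense LL_cont by blast


end
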